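(* Let $\alpha\in(0,0.948]$. For $m\in\mathbf{Z}$ let $\alpha_m=e^{-\pi m^2/(2\alpha)}$ and let $D_m$ be the operator of multiplication on $L^2(\mathbf{R})$ by $\Phi_m(t)=\vartheta\big(-\tfrac{t}{\sqrt\alpha}+\tfrac{m}{2\alpha},\tfrac{i}{2\alpha}\big)$. Let $V_1,V_2$ be the unitaries on $L^2(\mathbf{R})$ given by $(V_1h)(s)=e^{-2\pi i s/\sqrt\alpha}h(s)$ and $(V_2h)(s)=h(s-1/\sqrt\alpha)$. Then $a_0=\sum_{m\in\mathbf{Z}}\alpha_mD_mV_2^m$ is a bounded invertible operator belonging to $C^*(V_1,V_2)$ (a rotation algebra $A_{1/\alpha}$), and $a_0=\sqrt2\,\langle f,f\rangle_{D^\perp}$, where $f(s)=e^{-\pi s^2}$.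
   Context: $\vartheta(z,\tau)=\sum_{m\in\mathbf{Z}}e^{\pi im^2\tau+2\pi imz}$. For $(x,y)\in\mathbf{R}^2$, $(\pi_{(x,y)}h)(t)=e^{2\pi ity}h(t+x)$ on $L^2(\mathbf{R})$. $\delta_1=(0,1/\sqrt\alpha)$, $\delta_2=(1/\sqrt\alpha,0)$, $D^\perp=\mathbf{Z}\delta_1+\mathbf{Z}\delta_2$ (so $V_j=\pi_{\delta_j}^*$), and $\langle f,f\rangle_{D^\perp}=\sum_{z\in D^\perp}\langle \pi_zf,f\rangle\,\pi_z^*$ with $\langle h,k\rangle=\int_{\mathbf{R}}h\bar k$. *)

theory Defs
  imports "HOL-Analysis.Analysis"
begin

text \<open>Functions on the real line; elements of L2(R) are represented by square-integrable
  Borel functions, operators by maps on such functions (equalities up to a.e.).\<close>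

type_synonym cfun = "real \<Rightarrow> complex"
type_synonym op = "cfun \<Rightarrow> cfun"

definition L2 :: "cfun set" where
  "L2 = {h. h \<in> borel_measurable lborel \<and> integrable lborel (\<lambda>t. (cmod (h t))^2)}"

definition l2norm :: "cfun \<Rightarrow> real" where
  "l2norm h = sqrt (\<integral>t. (cmod (h t))^2 \<partial>lborel)"

definition l2inner :: "cfun \<Rightarrow> cfun \<Rightarrow> complex" where
  "l2inner h k = (\<integral>t. h t * cnj (k t) \<partial>lborel)"

definition bounded_op :: "op \<Rightarrow> bool" where
  "bounded_op T \<longleftrightarrow>
     (\<forall>h\<in>L2. T h \<in> L2) \<and>
     (\<forall>h\<in>L2. \<forall>k\<in>L2. (AE t in lborel. h t = k t) \<longrightarrow> (AE t in lborel. T h t = T k t)) \<and>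
     (\<forall>h\<in>L2. \<forall>k\<in>L2. \<forall>c. AE t in lborel. T (\<lambda>s. c * h s + k s) t = c * T h t + T k t) \<and>
     (\<exists>C. \<forall>h\<in>L2. l2norm (T h) \<le> C * l2norm h)"

definition invertible_op :: "op \<Rightarrow> bool" where
  "invertible_op T \<longleftrightarrow> bounded_op T \<and>
     (\<exists>S. bounded_op S \<and> (\<forall>h\<in>L2. AE t in lborel. S (T h) t = h t)
                        \<and> (\<forall>h\<in>L2. AE t in lborel. T (S h) t = h t))"

definition op_approx :: "op \<Rightarrow> op \<Rightarrow> real \<Rightarrow> bool" where
  "op_approx T S eps \<longleftrightarrow> (\<forall>h\<in>L2. l2norm (\<lambda>t. T h t - S h t) \<le> eps * l2norm h)"

inductive_set gen_alg :: "op set \<Rightarrow> op set" for G :: "op set" where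
  gen: "g \<in> G \<Longrightarrow> g \<in> gen_alg G"
| add: "S \<in> gen_alg G \<Longrightarrow> T \<in> gen_alg G \<Longrightarrow> (\<lambda>h t. S h t + T h t) \<in> gen_alg G"
| smult: "T \<in> gen_alg G \<Longrightarrow> (\<lambda>h t. c * T h t) \<in> gen_alg G"
| comp: "S \<in> gen_alg G \<Longrightarrow> T \<in> gen_alg G \<Longrightarrow> (\<lambda>h. S (T h)) \<in> gen_alg G"

text \<open>C*-algebra generated by G, where G is assumed closed under adjoints (so that the
  algebra generated is a *-algebra): its operator-norm closure.\<close>
definition cstar_gen :: "op set \<Rightarrow> op set" where
  "cstar_gen G = {T. bounded_op T \<and> (\<forall>eps>0. \<exists>P\<in>gen_alg G. op_approx T P eps)}"

definition pi_op :: "real \<Rightarrow> real \<Rightarrow> op" where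
  "pi_op x y h = (\<lambda>t. exp (2 * pi * \<i> * complex_of_real (t * y)) * h (t + x))"

definition pi_adj :: "real \<Rightarrow> real \<Rightarrow> op" where
  "pi_adj x y h = (\<lambda>t. exp (- 2 * pi * \<i> * complex_of_real ((t - x) * y)) * h (t - x))"

text \<open>V1 = pi_(delta1)^*, V2 = pi_(delta2)^*, delta1 = (0, 1/sqrt a), delta2 = (1/sqrt a, 0).\<close>
definition V1 :: "real \<Rightarrow> op" where "V1 a = pi_adj 0 (1 / sqrt a)"
definition V2 :: "real \<Rightarrow> op" where "V2 a = pi_adj (1 / sqrt a) 0"

definition rot_alg :: "real \<Rightarrow> op set" where
  "rot_alg a = cstar_gen {V1 a, V2 a, pi_op 0 (1 / sqrt a), pi_op (1 / sqrt a) 0}"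

definition jtheta :: "complex \<Rightarrow> complex \<Rightarrow> complex" where
  "jtheta z \<tau> = infsum (\<lambda>m::int. exp (pi * \<i> * of_int (m^2) * \<tau> + 2 * pi * \<i> * of_int m * z)) UNIV"

definition alpha_coef :: "real \<Rightarrow> int \<Rightarrow> real" where
  "alpha_coef a m = exp (- pi * of_int (m^2) / (2 * a))"

definition Phi :: "real \<Rightarrow> int \<Rightarrow> real \<Rightarrow> complex" where
  "Phi a m t = jtheta (complex_of_real (- t / sqrt a + of_int m / (2 * a)))
                      (\<i> / complex_of_real (2 * a))"

text \<open>The m-th term alpha_m D_m V2^m, where V2^m h (s) = h (s - m / sqrt a).\<close>
definition a0_term :: "real \<Rightarrow> int \<Rightarrow> op" where
  "a0_term a m h = (\<lambda>s. complex_of_real (alpha_coef a m) * Phi a m s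
                          * pi_adj (of_int m / sqrt a) 0 h s)"

definition a0_partial :: "real \<Rightarrow> nat \<Rightarrow> op" where
  "a0_partial a n h = (\<lambda>s. \<Sum>m\<in>{- int n..int n}. a0_term a m h s)"

definition a0 :: "real \<Rightarrow> op" where
  "a0 a h = (\<lambda>s. infsum (\<lambda>m::int. a0_term a m h s) UNIV)"

definition a0_series_converges :: "real \<Rightarrow> bool" where
  "a0_series_converges a \<longleftrightarrow>
     (\<forall>eps>0. \<exists>N. \<forall>n\<ge>N. op_approx (a0 a) (a0_partial a n) eps)"

text \<open>D-perp valued inner product: sum over z = j delta1 + k delta2 of <pi_z f, f> pi_z^*.\<close>
definition gram :: "real \<Rightarrow> cfun \<Rightarrow> op" where
  "gram a f h = (\<lambda>s. infsum (\<lambda>(j::int, k::int).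
       l2inner (pi_op (of_int k / sqrt a) (of_int j / sqrt a) f) f
       * pi_adj (of_int k / sqrt a) (of_int j / sqrt a) h s) UNIV)"

definition gauss :: cfun where
  "gauss s = complex_of_real (exp (- pi * s^2))"

end

theory Submission imports Defs "HOL-Probability.Probability" begin

lemma infsum_eq_integral_count:
  fixes f :: "'i::countable \<Rightarrow> complex"
  shows "infsum f UNIV = (\<integral>x. f x \<partial>count_space UNIV)"
proof (cases "integrable (count_space UNIV) f")
  case True
  then have "Infinite_Set_Sum.abs_summable_on f UNIV" by (simp add: abs_summable_on_def)
  then show ?thesis using infsetsum_infsum[of f UNIV] by (simp add: infsetsum_def)
next
  case False
  then have "\<not> Infinite_Set_Sum.abs_summable_on f UNIV" by (simp add: abs_summable_on_def)
  then have "\<not> (\<lambda>x. norm (f x)) summable_on UNIV"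
    using abs_summable_equivalent by blast
  then have "\<not> f summable_on UNIV"
    using summable_on_iff_abs_summable_on_complex by blast
  then show ?thesis using False by (simp add: infsum_not_exists not_integrable_integral_eq)
qed

lemma measurable_infsum:
  fixes f :: "'i::countable \<Rightarrow> 'a \<Rightarrow> complex"
  assumes "\<And>i. f i \<in> borel_measurable M"
  shows "(\<lambda>s. infsum (\<lambda>i. f i s) UNIV) \<in> borel_measurable M"
proof -
  have m: "(\<lambda>(i, s). f i s) \<in> borel_measurable (count_space UNIV \<Otimes>\<^sub>M M)"
    by (rule measurable_pair_measure_countable1) (auto simp: assms)
  have "(\<lambda>(s, i). f i s) \<in> borel_measurable (M \<Otimes>\<^sub>M count_space UNIV)"
    using m by (subst measurable_pair_swap_iff) simp
  then have "(\<lambda>s. \<integral>i. f i s \<partial>count_space UNIV) \<in> borel_measurable M"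
    using sigma_finite_measure.borel_measurable_lebesgue_integral[OF sigma_finite_measure_count_space, of "\<lambda>s i. f i s" M]
    by simp
  then show ?thesis by (simp add: infsum_eq_integral_count)
qed

lemma nn_count_finite_summable:
  fixes g :: "'i \<Rightarrow> real"
  assumes "\<And>x. g x \<ge> 0" "(\<integral>\<^sup>+x. ennreal (g x) \<partial>count_space UNIV) < \<infinity>"
  shows "g summable_on UNIV"
proof -
  have "integrable (count_space UNIV) g"
    using assms by (auto simp: integrable_iff_bounded)
  then have "Infinite_Set_Sum.abs_summable_on g UNIV" by (simp add: abs_summable_on_def)
  then have "(\<lambda>x. norm (g x)) summable_on UNIV" using abs_summable_equivalent by blast
  then show ?thesis using assms(1) by simp
qed

lemma nn_count_eq_infsum:
  fixes g :: "'i \<Rightarrow> real"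
  assumes "\<And>x. g x \<ge> 0" "g summable_on UNIV"
  shows "(\<integral>\<^sup>+x. ennreal (g x) \<partial>count_space UNIV) = ennreal (infsum g UNIV)"
proof -
  have "(\<lambda>x. norm (g x)) summable_on UNIV" using assms by simp
  then have a: "Infinite_Set_Sum.abs_summable_on g UNIV" using abs_summable_equivalent by blast
  then show ?thesis
    using nn_integral_conv_infsetsum[OF a] infsetsum_infsum[OF a] assms(1) by simp
qed

lemma L2_nn:
  assumes "h \<in> L2"
  shows "(\<integral>\<^sup>+t. ennreal ((cmod (h t))^2) \<partial>lborel) = ennreal ((l2norm h)^2)"
proof -
  have i: "integrable lborel (\<lambda>t. (cmod (h t))^2)" using assms by (simp add: L2_def)
  have "(l2norm h)^2 = (\<integral>t. (cmod (h t))^2 \<partial>lborel)"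
    unfolding l2norm_def by (simp add: integral_nonneg)
  then show ?thesis using nn_integral_eq_integral[OF i] by simp
qed

lemma L2_meas: "h \<in> L2 \<Longrightarrow> h \<in> borel_measurable borel"
  by (simp add: L2_def)

lemma L2I:
  assumes m: "F \<in> borel_measurable borel"
    and b: "(\<integral>\<^sup>+t. ennreal ((cmod (F t))^2) \<partial>lborel) \<le> ennreal K" and K: "0 \<le> K"
  shows "F \<in> L2" "(l2norm F)^2 \<le> K"
proof -
  have "integrable lborel (\<lambda>t. (cmod (F t))^2)"
    using m b by (auto simp: integrable_iff_bounded intro: le_less_trans)
  then show F: "F \<in> L2" using m by (simp add: L2_def)
  show "(l2norm F)^2 \<le> K" using L2_nn[OF F] b K by simp
qed

lemma shift_nn:
  fixes f :: "real \<Rightarrow> ennreal"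
  assumes "f \<in> borel_measurable borel"
  shows "(\<integral>\<^sup>+s. f (s - x) \<partial>lborel) = (\<integral>\<^sup>+s. f s \<partial>lborel)"
  using nn_integral_real_affine[OF assms, of 1 "-x"] by simp

lemma AE_shift:
  fixes P :: "real \<Rightarrow> bool"
  assumes "AE s in lborel. P s" "Measurable.pred borel P"
  shows "AE s in lborel. P (s - x)"
  using AE_borel_affine[of 1 P "-x"] assms by simp

definition wop :: "real \<Rightarrow> (int \<Rightarrow> real \<Rightarrow> complex) \<Rightarrow> op" where
  "wop \<tau> c h = (\<lambda>s. infsum (\<lambda>m. c m s * h (s - of_int m * \<tau>)) UNIV)"

definition cdom :: "(int \<Rightarrow> real \<Rightarrow> complex) \<Rightarrow> (int \<Rightarrow> real) \<Rightarrow> bool" where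
  "cdom c w \<longleftrightarrow> (\<forall>m. c m \<in> borel_measurable borel) \<and> (\<forall>m s. norm (c m s) \<le> w m)
      \<and> w summable_on UNIV"

lemma cdom_nonneg: "cdom c w \<Longrightarrow> 0 \<le> w m"
  unfolding cdom_def by (meson norm_ge_zero order_trans)

lemma wop_meas:
  assumes "cdom c w" "h \<in> borel_measurable borel"
  shows "wop \<tau> c h \<in> borel_measurable borel"
  unfolding wop_def
proof (rule measurable_infsum)
  fix m
  have [measurable]: "c m \<in> borel_measurable borel" "h \<in> borel_measurable borel"
    using assms by (auto simp: cdom_def)
  show "(\<lambda>s. c m s * h (s - of_int m * \<tau>)) \<in> borel_measurable borel" by measurable
qed

lemma nn_count_meas:
  fixes f :: "'i::countable \<Rightarrow> 'a \<Rightarrow> ennreal"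
  assumes "\<And>i. f i \<in> borel_measurable M"
  shows "(\<lambda>s. \<integral>\<^sup>+i. f i s \<partial>count_space UNIV) \<in> borel_measurable M"
proof -
  have m: "(\<lambda>(i, s). f i s) \<in> borel_measurable (count_space UNIV \<Otimes>\<^sub>M M)"
    by (rule measurable_pair_measure_countable1) (auto simp: assms)
  have "(\<lambda>(s, i). f i s) \<in> borel_measurable (M \<Otimes>\<^sub>M count_space UNIV)"
    using m by (subst measurable_pair_swap_iff) simp
  then show ?thesis
    using sigma_finite_measure.borel_measurable_nn_integral[OF sigma_finite_measure_count_space, of "\<lambda>s i. f i s" M]
    by simp
qed

lemma wop_key:
  fixes \<tau> :: real
  assumes cd: "cdom c w" and h: "h \<in> L2"
  defines "A \<equiv> (\<lambda>s. \<integral>\<^sup>+m. ennreal (w m * cmod (h (s - of_int m * \<tau>))) \<partial>count_space UNIV)"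
  shows "\<And>s. ennreal (cmod (wop \<tau> c h s)) \<le> A s"
    and "A \<in> borel_measurable borel"
    and "(\<integral>\<^sup>+s. (A s)^2 \<partial>lborel) \<le> ennreal ((infsum w UNIV)^2 * (l2norm h)^2)"
proof -
  have w0: "\<And>m. 0 \<le> w m" using cdom_nonneg[OF cd] .
  have ws: "w summable_on UNIV" using cd by (simp add: cdom_def)
  have hm: "h \<in> borel_measurable borel" using h by (simp add: L2_def)
  show "ennreal (cmod (wop \<tau> c h s)) \<le> A s" for s
  proof (cases "(\<lambda>m. w m * cmod (h (s - of_int m * \<tau>))) summable_on UNIV")
    case True
    have le: "norm (c m s * h (s - of_int m * \<tau>)) \<le> w m * cmod (h (s - of_int m * \<tau>))" for m
      using cd by (auto simp: cdom_def norm_mult intro!: mult_right_mono)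
    have as: "(\<lambda>m. norm (c m s * h (s - of_int m * \<tau>))) summable_on UNIV"
      by (rule summable_on_comparison_test[OF True]) (use le in auto)
    have "cmod (wop \<tau> c h s) \<le> infsum (\<lambda>m. norm (c m s * h (s - of_int m * \<tau>))) UNIV"
      unfolding wop_def by (rule norm_infsum_bound) (use as in simp)
    also have "\<dots> \<le> infsum (\<lambda>m. w m * cmod (h (s - of_int m * \<tau>))) UNIV"
      by (rule infsum_mono[OF as True le])
    finally show ?thesis
      unfolding A_def using nn_count_eq_infsum[OF _ True] w0 by (simp add: ennreal_leI)
  next
    case False
    then have "A s = \<infinity>" unfolding A_def
      using nn_count_finite_summable[of "\<lambda>m. w m * cmod (h (s - of_int m * \<tau>))"] w0
      by (auto simp: top_unique less_top[symmetric])
    then show ?thesis by simp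
  qed
  show Am: "A \<in> borel_measurable borel"
    unfolding A_def by (rule nn_count_meas) (use hm in measurable)
  define W where "W = infsum w UNIV"
  have W0: "0 \<le> W" unfolding W_def using w0 by (simp add: infsum_nonneg)
  have Wn: "(\<integral>\<^sup>+m. ennreal (w m) \<partial>count_space UNIV) = ennreal W"
    unfolding W_def by (rule nn_count_eq_infsum[OF w0 ws])
  have CS: "(A s)^2 \<le> ennreal W * (\<integral>\<^sup>+m. ennreal (w m * (cmod (h (s - of_int m * \<tau>)))^2) \<partial>count_space UNIV)" for s
  proof -
    have "A s = (\<integral>\<^sup>+m. ennreal (sqrt (w m)) * ennreal (sqrt (w m) * cmod (h (s - of_int m * \<tau>))) \<partial>count_space UNIV)"
      unfolding A_def
      by (rule nn_integral_cong) (simp add: ennreal_mult'[symmetric] w0 mult.assoc[symmetric])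
    then have "(A s)^2 \<le> (\<integral>\<^sup>+m. (ennreal (sqrt (w m)))^2 \<partial>count_space UNIV) *
        (\<integral>\<^sup>+m. (ennreal (sqrt (w m) * cmod (h (s - of_int m * \<tau>))))^2 \<partial>count_space UNIV)"
      using Cauchy_Schwarz_nn_integral[of "\<lambda>m. ennreal (sqrt (w m))" "count_space UNIV"
          "\<lambda>m. ennreal (sqrt (w m) * cmod (h (s - of_int m * \<tau>)))"] by simp
    also have "\<dots> = ennreal W * (\<integral>\<^sup>+m. ennreal (w m * (cmod (h (s - of_int m * \<tau>)))^2) \<partial>count_space UNIV)"
    proof -
      have e1: "(\<integral>\<^sup>+m. (ennreal (sqrt (w m)))^2 \<partial>count_space UNIV) = ennreal W"
        unfolding Wn[symmetric] by (rule nn_integral_cong) (use w0 in \<open>simp add: ennreal_power\<close>)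
      have e2: "(\<integral>\<^sup>+m. (ennreal (sqrt (w m) * cmod (h (s - of_int m * \<tau>))))^2 \<partial>count_space UNIV)
         = (\<integral>\<^sup>+m. ennreal (w m * (cmod (h (s - of_int m * \<tau>)))^2) \<partial>count_space UNIV)"
        by (rule nn_integral_cong) (use w0 in \<open>simp add: ennreal_power power_mult_distrib\<close>)
      show ?thesis using e1 e2 by simp
    qed
    finally show ?thesis .
  qed
  have "(\<integral>\<^sup>+s. (A s)^2 \<partial>lborel) \<le> (\<integral>\<^sup>+s. ennreal W * (\<integral>\<^sup>+m. ennreal (w m * (cmod (h (s - of_int m * \<tau>)))^2) \<partial>count_space UNIV) \<partial>lborel)"
    by (rule nn_integral_mono) (rule CS)
  also have "\<dots> = ennreal W * (\<integral>\<^sup>+s. (\<integral>\<^sup>+m. ennreal (w m * (cmod (h (s - of_int m * \<tau>)))^2) \<partial>count_space UNIV) \<partial>lborel)"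
    by (rule nn_integral_cmult) (rule nn_count_meas, use hm in measurable)
  also have "(\<integral>\<^sup>+s. (\<integral>\<^sup>+m. ennreal (w m * (cmod (h (s - of_int m * \<tau>)))^2) \<partial>count_space UNIV) \<partial>lborel)
      = (\<integral>\<^sup>+m. (\<integral>\<^sup>+s. ennreal (w m * (cmod (h (s - of_int m * \<tau>)))^2) \<partial>lborel) \<partial>count_space UNIV)"
    by (rule nn_integral_count_space_nn_integral) (use hm in auto)
  also have "\<dots> = (\<integral>\<^sup>+m. ennreal (w m) * ennreal ((l2norm h)^2) \<partial>count_space UNIV)"
  proof (rule nn_integral_cong)
    fix m
    have "(\<integral>\<^sup>+s. ennreal (w m * (cmod (h (s - of_int m * \<tau>)))^2) \<partial>lborel)
        = ennreal (w m) * (\<integral>\<^sup>+s. ennreal ((cmod (h (s - of_int m * \<tau>)))^2) \<partial>lborel)"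
      using w0 by (subst nn_integral_cmult[symmetric]) (use hm in \<open>auto simp: ennreal_mult\<close>)
    also have "(\<integral>\<^sup>+s. ennreal ((cmod (h (s - of_int m * \<tau>)))^2) \<partial>lborel)
        = (\<integral>\<^sup>+s. ennreal ((cmod (h s))^2) \<partial>lborel)"
      by (rule shift_nn[of "\<lambda>s. ennreal ((cmod (h s))^2)"]) (use hm in measurable)
    also have "\<dots> = ennreal ((l2norm h)^2)" by (rule L2_nn[OF h])
    finally show "(\<integral>\<^sup>+s. ennreal (w m * (cmod (h (s - of_int m * \<tau>)))^2) \<partial>lborel) = ennreal (w m) * ennreal ((l2norm h)^2)" .
  qed
  also have "\<dots> = ennreal W * ennreal ((l2norm h)^2)"
    by (subst nn_integral_multc) (auto simp: Wn)
  finally show "(\<integral>\<^sup>+s. (A s)^2 \<partial>lborel) \<le> ennreal ((infsum w UNIV)^2 * (l2norm h)^2)"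
    using W0 by (simp add: W_def ennreal_mult[symmetric] power2_eq_square mult.assoc)
qed

lemma wop_L2:
  fixes \<tau> :: real
  assumes cd: "cdom c w" and h: "h \<in> L2"
  shows "wop \<tau> c h \<in> L2" "l2norm (wop \<tau> c h) \<le> infsum w UNIV * l2norm h"
proof -
  define A where "A \<equiv> (\<lambda>s. \<integral>\<^sup>+m. ennreal (w m * cmod (h (s - of_int m * \<tau>))) \<partial>count_space UNIV)"
  have k1: "\<And>s. ennreal (cmod (wop \<tau> c h s)) \<le> A s"
    using wop_key(1)[OF cd h, of \<tau>] unfolding A_def .
  have k2: "A \<in> borel_measurable borel"
    using wop_key(2)[OF cd h, of \<tau>] unfolding A_def .
  have k3: "(\<integral>\<^sup>+s. (A s)^2 \<partial>lborel) \<le> ennreal ((infsum w UNIV)^2 * (l2norm h)^2)"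
    using wop_key(3)[OF cd h, of \<tau>] unfolding A_def .
  have hm: "h \<in> borel_measurable borel" using h by (simp add: L2_def)
  have m: "wop \<tau> c h \<in> borel_measurable borel" by (rule wop_meas[OF cd hm])
  have "(\<integral>\<^sup>+s. ennreal ((cmod (wop \<tau> c h s))^2) \<partial>lborel) \<le> (\<integral>\<^sup>+s. (A s)^2 \<partial>lborel)"
  proof (rule nn_integral_mono)
    fix s
    have "ennreal ((cmod (wop \<tau> c h s))^2) = (ennreal (cmod (wop \<tau> c h s)))^2"
      by (simp add: ennreal_power)
    also have "\<dots> \<le> (A s)^2" using k1[of s] by (rule power_mono) simp
    finally show "ennreal ((cmod (wop \<tau> c h s))^2) \<le> (A s)^2" .
  qed
  also have "\<dots> \<le> ennreal ((infsum w UNIV)^2 * (l2norm h)^2)" by (rule k3)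
  finally have b: "(\<integral>\<^sup>+s. ennreal ((cmod (wop \<tau> c h s))^2) \<partial>lborel) \<le> ennreal ((infsum w UNIV)^2 * (l2norm h)^2)" .
  show "wop \<tau> c h \<in> L2" by (rule L2I(1)[OF m b]) simp
  have "(l2norm (wop \<tau> c h))^2 \<le> (infsum w UNIV * l2norm h)^2"
    using L2I(2)[OF m b] by (simp add: power_mult_distrib)
  moreover have "0 \<le> infsum w UNIV * l2norm h"
    using cdom_nonneg[OF cd] by (simp add: infsum_nonneg l2norm_def)
  ultimately show "l2norm (wop \<tau> c h) \<le> infsum w UNIV * l2norm h"
    by (rule power2_le_imp_le)
qed

lemma wop_AE_fin:
  fixes \<tau> :: real
  assumes cd: "cdom c w" and h: "h \<in> L2"
  shows "AE s in lborel. (\<lambda>m. w m * cmod (h (s - of_int m * \<tau>))) summable_on UNIV"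
proof -
  define A where "A \<equiv> (\<lambda>s. \<integral>\<^sup>+m. ennreal (w m * cmod (h (s - of_int m * \<tau>))) \<partial>count_space UNIV)"
  have k1: "\<And>s. ennreal (cmod (wop \<tau> c h s)) \<le> A s"
    using wop_key(1)[OF cd h, of \<tau>] unfolding A_def .
  have k2: "A \<in> borel_measurable borel"
    using wop_key(2)[OF cd h, of \<tau>] unfolding A_def .
  have k3: "(\<integral>\<^sup>+s. (A s)^2 \<partial>lborel) \<le> ennreal ((infsum w UNIV)^2 * (l2norm h)^2)"
    using wop_key(3)[OF cd h, of \<tau>] unfolding A_def .
  have "(\<integral>\<^sup>+s. (A s)^2 \<partial>lborel) \<noteq> \<infinity>"
  proof -
    have "(\<integral>\<^sup>+s. (A s)^2 \<partial>lborel) < \<infinity>" using k3 by (rule le_less_trans) simp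
    then show ?thesis by simp
  qed
  moreover have "(\<lambda>s. (A s)^2) \<in> borel_measurable lborel" using k2 by simp
  ultimately have "AE s in lborel. (A s)^2 \<noteq> \<infinity>"
    using nn_integral_PInf_AE by blast
  then show ?thesis
  proof (rule AE_mp, intro AE_I2 impI)
    fix s assume "(A s)^2 \<noteq> \<infinity>"
    then have "A s < \<infinity>" using power_eq_top_ennreal_iff by (auto simp: less_top)
    then show "(\<lambda>m. w m * cmod (h (s - of_int m * \<tau>))) summable_on UNIV"
      unfolding A_def
      by (rule nn_count_finite_summable[rotated]) (use cdom_nonneg[OF cd] in simp)
  qed
qed

lemma wop_term_abs:
  fixes \<tau> :: real
  assumes cd: "cdom c w" and sm: "(\<lambda>m. w m * cmod (h (s - of_int m * \<tau>))) summable_on UNIV"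
  shows "(\<lambda>m. norm (c m s * h (s - of_int m * \<tau>))) summable_on UNIV"
    "(\<lambda>m. c m s * h (s - of_int m * \<tau>)) summable_on UNIV"
proof -
  have le: "norm (c m s * h (s - of_int m * \<tau>)) \<le> w m * cmod (h (s - of_int m * \<tau>))" for m
    using cd by (auto simp: cdom_def norm_mult intro!: mult_right_mono)
  show a: "(\<lambda>m. norm (c m s * h (s - of_int m * \<tau>))) summable_on UNIV"
    by (rule summable_on_comparison_test[OF sm]) (use le in auto)
  show "(\<lambda>m. c m s * h (s - of_int m * \<tau>)) summable_on UNIV"
    using abs_summable_summable[OF a] .
qed

lemma AE_shift_all:
  fixes P :: "real \<Rightarrow> bool" and \<tau> :: real
  assumes "AE s in lborel. P s" "Measurable.pred borel P"
  shows "AE s in lborel. \<forall>m::int. P (s - of_int m * \<tau>)"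
proof -
  have "\<And>m::int. AE s in lborel. P (s - of_int m * \<tau>)"
    using assms by (rule AE_shift)
  then show ?thesis by (simp add: AE_all_countable)
qed

lemma wop_cong_AE:
  fixes \<tau> :: real
  assumes h: "h \<in> L2" and k: "k \<in> L2" and e: "AE s in lborel. h s = k s"
  shows "AE s in lborel. wop \<tau> c h s = wop \<tau> c k s"
proof -
  have [measurable]: "h \<in> borel_measurable borel" "k \<in> borel_measurable borel"
    using h k by (auto simp: L2_def)
  have "AE s in lborel. \<forall>m::int. h (s - of_int m * \<tau>) = k (s - of_int m * \<tau>)"
    by (rule AE_shift_all[OF e]) measurable
  then show ?thesis by eventually_elim (simp add: wop_def)
qed

lemma wop_lin_AE:
  fixes \<tau> :: real
  assumes cd: "cdom c w" and h: "h \<in> L2" and k: "k \<in> L2"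
  shows "AE t in lborel. wop \<tau> c (\<lambda>s. a * h s + k s) t = a * wop \<tau> c h t + wop \<tau> c k t"
  using wop_AE_fin[OF cd h, of \<tau>] wop_AE_fin[OF cd k, of \<tau>]
proof eventually_elim
  case (elim t)
  have s1: "(\<lambda>m. c m t * h (t - of_int m * \<tau>)) summable_on UNIV"
    using wop_term_abs(2)[OF cd elim(1)] .
  have s2: "(\<lambda>m. c m t * k (t - of_int m * \<tau>)) summable_on UNIV"
    using wop_term_abs(2)[OF cd elim(2)] .
  have "wop \<tau> c (\<lambda>s. a * h s + k s) t
     = infsum (\<lambda>m. a * (c m t * h (t - of_int m * \<tau>)) + c m t * k (t - of_int m * \<tau>)) UNIV"
    unfolding wop_def by (simp add: algebra_simps)
  also have "\<dots> = infsum (\<lambda>m. a * (c m t * h (t - of_int m * \<tau>))) UNIV + infsum (\<lambda>m. c m t * k (t - of_int m * \<tau>)) UNIV"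
    by (rule infsum_add) (use s1 s2 summable_on_cmult_right in auto)
  also have "\<dots> = a * wop \<tau> c h t + wop \<tau> c k t"
    unfolding wop_def by (simp add: infsum_cmult_right[OF s1])
  finally show ?case .
qed

lemma wop_bounded:
  fixes \<tau> :: real
  assumes cd: "cdom c w"
  shows "bounded_op (wop \<tau> c)"
  unfolding bounded_op_def
proof (intro conjI ballI allI impI)
  show "\<And>h. h \<in> L2 \<Longrightarrow> wop \<tau> c h \<in> L2" using wop_L2(1)[OF cd] .
  show "\<And>h k. h \<in> L2 \<Longrightarrow> k \<in> L2 \<Longrightarrow> AE t in lborel. h t = k t \<Longrightarrow> AE t in lborel. wop \<tau> c h t = wop \<tau> c k t"
    by (rule wop_cong_AE)
  show "\<And>h k a. h \<in> L2 \<Longrightarrow> k \<in> L2 \<Longrightarrow> AE t in lborel. wop \<tau> c (\<lambda>s. a * h s + k s) t = a * wop \<tau> c h t + wop \<tau> c k t"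
    by (rule wop_lin_AE[OF cd])
  show "\<exists>C. \<forall>h\<in>L2. l2norm (wop \<tau> c h) \<le> C * l2norm h"
    using wop_L2(2)[OF cd] by blast
qed

lemma nn_count_pair:
  fixes f :: "'a::countable \<times> 'b::countable \<Rightarrow> ennreal"
  shows "(\<integral>\<^sup>+p. f p \<partial>count_space UNIV) = (\<integral>\<^sup>+x. \<integral>\<^sup>+y. f (x, y) \<partial>count_space UNIV \<partial>count_space UNIV)"
proof -
  have "(\<integral>\<^sup>+x. \<integral>\<^sup>+y. f (x, y) \<partial>count_space UNIV \<partial>count_space UNIV)
      = (\<integral>\<^sup>+p. f p \<partial>(count_space UNIV \<Otimes>\<^sub>M count_space UNIV))"
    using sigma_finite_measure.nn_integral_fst[OF sigma_finite_measure_count_space, of f "count_space (UNIV::'a set)" "UNIV::'b set"]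
    by (simp add: pair_measure_countable)
  also have "\<dots> = (\<integral>\<^sup>+p. f p \<partial>count_space UNIV)"
    by (simp add: pair_measure_countable)
  finally show ?thesis ..
qed

lemma nn_count_shift:
  fixes f :: "int \<Rightarrow> ennreal"
  shows "(\<integral>\<^sup>+n. f (n - m) \<partial>count_space UNIV) = (\<integral>\<^sup>+n. f n \<partial>count_space UNIV)"
proof -
  have "bij_betw (\<lambda>n. n - m) UNIV UNIV"
    by (rule bij_betwI[where g="\<lambda>n. n + m"]) auto
  then show ?thesis by (rule nn_integral_bij_count_space)
qed

lemma nn_count_swap:
  fixes f :: "'a::countable \<Rightarrow> 'b::countable \<Rightarrow> ennreal"
  shows "(\<integral>\<^sup>+x. \<integral>\<^sup>+y. f x y \<partial>count_space UNIV \<partial>count_space UNIV)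
       = (\<integral>\<^sup>+y. \<integral>\<^sup>+x. f x y \<partial>count_space UNIV \<partial>count_space UNIV)"
  by (rule nn_integral_count_space_nn_integral) auto

definition conv :: "(int \<Rightarrow> real) \<Rightarrow> (int \<Rightarrow> real) \<Rightarrow> int \<Rightarrow> real" where
  "conv a b n = infsum (\<lambda>m. a m * b (n - m)) UNIV"

definition tconv :: "real \<Rightarrow> (int \<Rightarrow> real \<Rightarrow> complex) \<Rightarrow> (int \<Rightarrow> real \<Rightarrow> complex) \<Rightarrow> int \<Rightarrow> real \<Rightarrow> complex" where
  "tconv \<tau> b c n s = infsum (\<lambda>m. b m s * c (n - m) (s - of_int m * \<tau>)) UNIV"

lemma summable_le_infsum:
  fixes b :: "'i \<Rightarrow> real"
  assumes "\<And>x. 0 \<le> b x" "b summable_on UNIV"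
  shows "b x \<le> infsum b UNIV"
proof -
  have "infsum b {x} \<le> infsum b UNIV"
    by (rule infsum_mono_neutral) (use assms in auto)
  then show ?thesis by simp
qed

lemma conv_term_summable:
  fixes a b :: "int \<Rightarrow> real"
  assumes a0: "\<And>m. 0 \<le> a m" and b0: "\<And>m. 0 \<le> b m"
    and as: "a summable_on UNIV" and bs: "b summable_on UNIV"
  shows "(\<lambda>m. a m * b (n - m)) summable_on UNIV"
proof -
  have "(\<lambda>m. a m * infsum b UNIV) summable_on UNIV"
    using as by (rule summable_on_cmult_left)
  then show ?thesis
    by (rule summable_on_comparison_test)
       (use a0 b0 summable_le_infsum[OF b0 bs] in \<open>auto intro!: mult_left_mono\<close>)
qed

lemma conv_props:
  fixes a b :: "int \<Rightarrow> real"
  assumes a0: "\<And>m. 0 \<le> a m" and b0: "\<And>m. 0 \<le> b m"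
    and as: "a summable_on UNIV" and bs: "b summable_on UNIV"
  shows "\<And>n. 0 \<le> conv a b n" "conv a b summable_on UNIV"
    "infsum (conv a b) UNIV = infsum a UNIV * infsum b UNIV"
proof -
  show c0: "0 \<le> conv a b n" for n
    unfolding conv_def by (rule infsum_nonneg) (use a0 b0 in auto)
  have e: "ennreal (conv a b n) = (\<integral>\<^sup>+m. ennreal (a m * b (n - m)) \<partial>count_space UNIV)" for n
    unfolding conv_def
    by (rule nn_count_eq_infsum[symmetric]) (use a0 b0 conv_term_summable[OF a0 b0 as bs] in auto)
  have "(\<integral>\<^sup>+n. ennreal (conv a b n) \<partial>count_space UNIV)
      = (\<integral>\<^sup>+n. \<integral>\<^sup>+m. ennreal (a m) * ennreal (b (n - m)) \<partial>count_space UNIV \<partial>count_space UNIV)"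
    by (simp add: e ennreal_mult a0 b0)
  also have "\<dots> = (\<integral>\<^sup>+m. \<integral>\<^sup>+n. ennreal (a m) * ennreal (b (n - m)) \<partial>count_space UNIV \<partial>count_space UNIV)"
    by (rule nn_count_swap)
  also have "\<dots> = (\<integral>\<^sup>+m. ennreal (a m) * ennreal (infsum b UNIV) \<partial>count_space UNIV)"
  proof (rule nn_integral_cong)
    fix m
    have "(\<integral>\<^sup>+n. ennreal (a m) * ennreal (b (n - m)) \<partial>count_space UNIV)
        = ennreal (a m) * (\<integral>\<^sup>+n. ennreal (b (n - m)) \<partial>count_space UNIV)"
      by (rule nn_integral_cmult) simp
    also have "\<dots> = ennreal (a m) * (\<integral>\<^sup>+n. ennreal (b n) \<partial>count_space UNIV)"
      by (subst nn_count_shift[of "\<lambda>n. ennreal (b n)"]) rule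
    also have "\<dots> = ennreal (a m) * ennreal (infsum b UNIV)"
      by (subst nn_count_eq_infsum[OF b0 bs]) rule
    finally show "(\<integral>\<^sup>+n. ennreal (a m) * ennreal (b (n - m)) \<partial>count_space UNIV) = ennreal (a m) * ennreal (infsum b UNIV)" .
  qed
  also have "\<dots> = ennreal (infsum a UNIV) * ennreal (infsum b UNIV)"
    by (subst nn_integral_multc) (auto simp: nn_count_eq_infsum[OF a0 as])
  also have "\<dots> = ennreal (infsum a UNIV * infsum b UNIV)"
    by (simp add: ennreal_mult infsum_nonneg a0 b0)
  finally have E: "(\<integral>\<^sup>+n. ennreal (conv a b n) \<partial>count_space UNIV) = ennreal (infsum a UNIV * infsum b UNIV)" .
  show cs: "conv a b summable_on UNIV"
    by (rule nn_count_finite_summable[OF c0]) (simp add: E)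
  show "infsum (conv a b) UNIV = infsum a UNIV * infsum b UNIV"
    using E nn_count_eq_infsum[OF c0 cs] by (simp add: infsum_nonneg a0 b0 c0)
qed

lemma cdom_zero:
  assumes "\<And>m. 0 \<le> w m" "w summable_on UNIV"
  shows "cdom (\<lambda>m s. 0) w"
  using assms by (simp add: cdom_def)

lemma tconv_cdom:
  fixes \<tau> :: real
  assumes cb: "cdom b wb" and cc: "cdom c wc"
  shows "cdom (tconv \<tau> b c) (conv wb wc)"
proof -
  have wb0: "\<And>m. 0 \<le> wb m" using cdom_nonneg[OF cb] .
  have wc0: "\<And>m. 0 \<le> wc m" using cdom_nonneg[OF cc] .
  have wbs: "wb summable_on UNIV" and wcs: "wc summable_on UNIV" using cb cc by (auto simp: cdom_def)
  have meas: "tconv \<tau> b c n \<in> borel_measurable borel" for n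
    unfolding tconv_def[abs_def]
  proof (rule measurable_infsum)
    fix m
    have [measurable]: "b m \<in> borel_measurable borel" "c (n - m) \<in> borel_measurable borel"
      using cb cc by (auto simp: cdom_def)
    show "(\<lambda>s. b m s * c (n - m) (s - of_int m * \<tau>)) \<in> borel_measurable borel" by measurable
  qed
  have bound: "norm (tconv \<tau> b c n s) \<le> conv wb wc n" for n s
  proof -
    have le: "norm (b m s * c (n - m) (s - of_int m * \<tau>)) \<le> wb m * wc (n - m)" for m
      using cb cc unfolding cdom_def norm_mult by (meson mult_mono' norm_ge_zero)
    have ts: "(\<lambda>m. wb m * wc (n - m)) summable_on UNIV"
      by (rule conv_term_summable[OF wb0 wc0 wbs wcs])
    have as: "(\<lambda>m. norm (b m s * c (n - m) (s - of_int m * \<tau>))) summable_on UNIV"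
      by (rule summable_on_comparison_test[OF ts]) (use le in auto)
    have "norm (tconv \<tau> b c n s) \<le> infsum (\<lambda>m. norm (b m s * c (n - m) (s - of_int m * \<tau>))) UNIV"
      unfolding tconv_def by (rule norm_infsum_bound) (use as in simp)
    also have "\<dots> \<le> conv wb wc n"
      unfolding conv_def by (rule infsum_mono[OF as ts le])
    finally show ?thesis .
  qed
  show ?thesis
    unfolding cdom_def using meas bound conv_props(2)[OF wb0 wc0 wbs wcs] by blast
qed

lemma AE_fin_nn:
  fixes \<tau> :: real
  assumes w0: "\<And>m. 0 \<le> w m" and ws: "w summable_on UNIV" and h: "h \<in> L2"
  shows "AE s in lborel. (\<integral>\<^sup>+m. ennreal (w m * cmod (h (s - of_int m * \<tau>))) \<partial>count_space UNIV) < \<infinity>"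
proof -
  define A where "A \<equiv> (\<lambda>s. \<integral>\<^sup>+m. ennreal (w m * cmod (h (s - of_int m * \<tau>))) \<partial>count_space UNIV)"
  have cd: "cdom (\<lambda>m s. 0) w" by (rule cdom_zero[OF w0 ws])
  have k2: "A \<in> borel_measurable borel"
    using wop_key(2)[OF cd h, of \<tau>] unfolding A_def .
  have k3: "(\<integral>\<^sup>+s. (A s)^2 \<partial>lborel) \<le> ennreal ((infsum w UNIV)^2 * (l2norm h)^2)"
    using wop_key(3)[OF cd h, of \<tau>] unfolding A_def .
  have "(\<integral>\<^sup>+s. (A s)^2 \<partial>lborel) \<noteq> \<infinity>"
  proof -
    have "(\<integral>\<^sup>+s. (A s)^2 \<partial>lborel) < \<infinity>" using k3 by (rule le_less_trans) simp
    then show ?thesis by simp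
  qed
  moreover have "(\<lambda>s. (A s)^2) \<in> borel_measurable lborel" using k2 by simp
  ultimately have "AE s in lborel. (A s)^2 \<noteq> \<infinity>"
    using nn_integral_PInf_AE by blast
  then show ?thesis
    by (rule AE_mp, intro AE_I2 impI) (use power_eq_top_ennreal_iff in \<open>auto simp: less_top A_def\<close>)
qed

lemma wop_comp:
  fixes \<tau> :: real
  assumes cb: "cdom b wb" and cc: "cdom c wc" and h: "h \<in> L2"
  shows "AE s in lborel. wop \<tau> b (wop \<tau> c h) s = wop \<tau> (tconv \<tau> b c) h s"
proof -
  have wb0: "\<And>m. 0 \<le> wb m" using cdom_nonneg[OF cb] .
  have wc0: "\<And>m. 0 \<le> wc m" using cdom_nonneg[OF cc] .
  have wbs: "wb summable_on UNIV" and wcs: "wc summable_on UNIV" using cb cc by (auto simp: cdom_def)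
  note cv = conv_props[OF wb0 wc0 wbs wcs]
  show ?thesis
    using AE_fin_nn[OF cv(1) cv(2) h, of \<tau>]
  proof eventually_elim
    case (elim s)
    define G where "G = (\<lambda>(m, k). wb m * wc k * cmod (h (s - of_int m * \<tau> - of_int k * \<tau>)))"
    define F where "F = (\<lambda>(m, k). b m s * (c k (s - of_int m * \<tau>) * h (s - of_int m * \<tau> - of_int k * \<tau>)))"
    have arg: "\<And>n m. s - of_int m * \<tau> - of_int (n - m) * \<tau> = s - of_int n * \<tau>"
      by (simp add: algebra_simps)
    have arg2: "\<And>n m. s - of_int m * \<tau> - (of_int n - of_int m) * \<tau> = s - of_int n * \<tau>"
      by (simp add: algebra_simps)
    have G0: "\<And>p. 0 \<le> G p" using wb0 wc0 by (auto simp: G_def)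
    have FG: "norm (F p) \<le> G p" for p
    proof (cases p)
      case (Pair m k)
      have "norm (F p) = norm (b m s) * (norm (c k (s - of_int m * \<tau>)) * cmod (h (s - of_int m * \<tau> - of_int k * \<tau>)))"
        by (simp add: F_def Pair norm_mult)
      also have "\<dots> \<le> wb m * (wc k * cmod (h (s - of_int m * \<tau> - of_int k * \<tau>)))"
        using cb cc wc0 wb0 unfolding cdom_def by (intro mult_mono mult_right_mono) auto
      finally show ?thesis by (simp add: G_def Pair mult.assoc)
    qed
    have "(\<integral>\<^sup>+p. ennreal (G p) \<partial>count_space UNIV)
        = (\<integral>\<^sup>+m. \<integral>\<^sup>+k. ennreal (G (m, k)) \<partial>count_space UNIV \<partial>count_space UNIV)"
      by (rule nn_count_pair)
    also have "\<dots> = (\<integral>\<^sup>+m. \<integral>\<^sup>+n. ennreal (G (m, n - m)) \<partial>count_space UNIV \<partial>count_space UNIV)"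
      by (rule nn_integral_cong) (rule nn_count_shift[symmetric, of "\<lambda>k. ennreal (G (_, k))"])
    also have "\<dots> = (\<integral>\<^sup>+n. \<integral>\<^sup>+m. ennreal (G (m, n - m)) \<partial>count_space UNIV \<partial>count_space UNIV)"
      by (rule nn_count_swap)
    also have "\<dots> = (\<integral>\<^sup>+n. ennreal (conv wb wc n * cmod (h (s - of_int n * \<tau>))) \<partial>count_space UNIV)"
    proof (rule nn_integral_cong)
      fix n
      have "(\<integral>\<^sup>+m. ennreal (G (m, n - m)) \<partial>count_space UNIV)
          = (\<integral>\<^sup>+m. ennreal (wb m * wc (n - m)) * ennreal (cmod (h (s - of_int n * \<tau>))) \<partial>count_space UNIV)"
        by (rule nn_integral_cong) (simp add: G_def arg arg2 ennreal_mult wb0 wc0)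
      also have "\<dots> = (\<integral>\<^sup>+m. ennreal (wb m * wc (n - m)) \<partial>count_space UNIV) * ennreal (cmod (h (s - of_int n * \<tau>)))"
        by (rule nn_integral_multc) simp
      also have "(\<integral>\<^sup>+m. ennreal (wb m * wc (n - m)) \<partial>count_space UNIV) = ennreal (conv wb wc n)"
        unfolding conv_def
        by (rule nn_count_eq_infsum) (use wb0 wc0 conv_term_summable[OF wb0 wc0 wbs wcs] in auto)
      finally show "(\<integral>\<^sup>+m. ennreal (G (m, n - m)) \<partial>count_space UNIV) = ennreal (conv wb wc n * cmod (h (s - of_int n * \<tau>)))"
        by (simp add: ennreal_mult cv(1))
    qed
    finally have Gfin: "(\<integral>\<^sup>+p. ennreal (G p) \<partial>count_space UNIV) < \<infinity>" using elim by simp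
    have Gs: "G summable_on UNIV" by (rule nn_count_finite_summable[OF G0 Gfin])
    have Fa: "(\<lambda>p. norm (F p)) summable_on UNIV"
      by (rule summable_on_comparison_test[OF Gs]) (use FG G0 in auto)
    have Fs: "F summable_on UNIV" using abs_summable_summable[OF Fa] .
    have Fs': "(\<lambda>(m, k). F (m, k)) summable_on (UNIV \<times> UNIV)" using Fs by simp
    have bij: "bij_betw (\<lambda>(n, m). (m, n - m)) (UNIV::(int\<times>int) set) UNIV"
      by (rule bij_betwI[where g="\<lambda>(m, k). (m + k, m)"]) auto
    have Fs2: "(\<lambda>(n, m). F (m, n - m)) summable_on (UNIV \<times> UNIV)"
      using summable_on_reindex_bij_betw[OF bij, of F] Fs by (simp add: case_prod_beta')
    have "wop \<tau> b (wop \<tau> c h) s = infsum (\<lambda>m. infsum (\<lambda>k. F (m, k)) UNIV) UNIV"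
      unfolding wop_def F_def by (simp add: infsum_cmult_right' algebra_simps)
    also have "\<dots> = infsum (\<lambda>(m, k). F (m, k)) (UNIV \<times> UNIV)"
      by (rule infsum_Sigma'_banach[OF Fs'])
    also have "\<dots> = infsum F UNIV" by simp
    also have "\<dots> = infsum (\<lambda>(n, m). F (m, n - m)) UNIV"
      using infsum_reindex_bij_betw[OF bij, of F] by (simp add: case_prod_beta')
    also have "\<dots> = infsum (\<lambda>(n, m). F (m, n - m)) (UNIV \<times> UNIV)" by simp
    also have "\<dots> = infsum (\<lambda>n. infsum (\<lambda>m. F (m, n - m)) UNIV) UNIV"
      by (rule infsum_Sigma'_banach[OF Fs2, symmetric])
    also have "\<dots> = wop \<tau> (tconv \<tau> b c) h s"
      unfolding wop_def tconv_def F_def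
      by (simp add: arg arg2 infsum_cmult_left'[symmetric] mult.assoc)
    finally show ?case .
  qed
qed

primrec nser :: "real \<Rightarrow> (int \<Rightarrow> real \<Rightarrow> complex) \<Rightarrow> (int \<Rightarrow> real \<Rightarrow> complex) \<Rightarrow> nat \<Rightarrow> int \<Rightarrow> real \<Rightarrow> complex" where
  "nser \<tau> k e 0 = e"
| "nser \<tau> k e (Suc j) = tconv \<tau> k (nser \<tau> k e j)"

primrec nwt :: "(int \<Rightarrow> real) \<Rightarrow> (int \<Rightarrow> real) \<Rightarrow> nat \<Rightarrow> int \<Rightarrow> real" where
  "nwt \<kappa> \<epsilon> 0 = \<epsilon>"
| "nwt \<kappa> \<epsilon> (Suc j) = conv \<kappa> (nwt \<kappa> \<epsilon> j)"

lemma nn_count_single: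
  fixes f :: "'a \<Rightarrow> ennreal"
  shows "f x \<le> (\<integral>\<^sup>+y. f y \<partial>count_space UNIV)"
proof -
  have "(\<integral>\<^sup>+y. f y * indicator {x} y \<partial>count_space UNIV) = (\<integral>\<^sup>+y. f x * indicator {x} y \<partial>count_space UNIV)"
    by (rule nn_integral_cong) (simp split: split_indicator)
  also have "\<dots> = f x" by (subst nn_integral_cmult_indicator) auto
  finally have e: "(\<integral>\<^sup>+y. f y * indicator {x} y \<partial>count_space UNIV) = f x" .
  have "(\<integral>\<^sup>+y. f y * indicator {x} y \<partial>count_space UNIV) \<le> (\<integral>\<^sup>+y. f y \<partial>count_space UNIV)"
    by (rule nn_integral_mono) (simp split: split_indicator)
  then show ?thesis using e by simp
qed

lemma infsum_nat_shift:
  fixes f :: "nat \<Rightarrow> complex"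
  assumes "f summable_on UNIV"
  shows "infsum f UNIV = f 0 + infsum (\<lambda>j. f (Suc j)) UNIV"
proof -
  have "x = 0 \<or> x \<in> range Suc" for x :: nat by (cases x) auto
  then have U: "(UNIV::nat set) = insert 0 (range Suc)" by auto
  have s: "f summable_on range Suc"
    using assms by (rule summable_on_subset_banach) simp
  have "infsum f UNIV = f 0 + infsum f (range Suc)"
    by (subst U, rule infsum_insert[OF s]) auto
  also have "infsum f (range Suc) = infsum (\<lambda>j. f (Suc j)) UNIV"
    using infsum_reindex[of Suc UNIV f] by (simp add: o_def)
  finally show ?thesis .
qed

lemma neumann_fix:
  fixes \<tau> :: real
  assumes ck: "cdom k \<kappa>" and ce: "cdom e \<epsilon>" and rho: "infsum \<kappa> UNIV < 1"
  defines "y \<equiv> (\<lambda>n s. infsum (\<lambda>j. nser \<tau> k e j n s) UNIV)"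
    and "W \<equiv> (\<lambda>n. infsum (\<lambda>j. nwt \<kappa> \<epsilon> j n) UNIV)"
  shows "cdom y W" "\<And>n s. y n s = e n s + tconv \<tau> k y n s"
proof -
  define \<rho> where "\<rho> = infsum \<kappa> UNIV"
  define E where "E = infsum \<epsilon> UNIV"
  have k0: "\<And>m. 0 \<le> \<kappa> m" using cdom_nonneg[OF ck] .
  have e0: "\<And>m. 0 \<le> \<epsilon> m" using cdom_nonneg[OF ce] .
  have ks: "\<kappa> summable_on UNIV" using ck by (simp add: cdom_def)
  have \<rho>0: "0 \<le> \<rho>" unfolding \<rho>_def by (rule infsum_nonneg) (use k0 in auto)
  have E0: "0 \<le> E" unfolding E_def by (rule infsum_nonneg) (use e0 in auto)
  have cj: "cdom (nser \<tau> k e j) (nwt \<kappa> \<epsilon> j) \<and> infsum (nwt \<kappa> \<epsilon> j) UNIV = \<rho>^j * E" for j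
  proof (induction j)
    case 0
    then show ?case using ce by (simp add: E_def)
  next
    case (Suc j)
    then have cd: "cdom (nser \<tau> k e j) (nwt \<kappa> \<epsilon> j)" and i: "infsum (nwt \<kappa> \<epsilon> j) UNIV = \<rho>^j * E" by auto
    have "infsum (conv \<kappa> (nwt \<kappa> \<epsilon> j)) UNIV = \<rho> * (\<rho>^j * E)"
      using conv_props(3)[OF k0 cdom_nonneg[OF cd] ks] cd i by (simp add: cdom_def \<rho>_def)
    then show ?case using tconv_cdom[OF ck cd, of \<tau>] by simp
  qed
  have nw0: "\<And>j n. 0 \<le> nwt \<kappa> \<epsilon> j n" using cj cdom_nonneg by blast
  have nws: "\<And>j. nwt \<kappa> \<epsilon> j summable_on UNIV" using cj by (simp add: cdom_def)
  have geo: "(\<integral>\<^sup>+j. ennreal (\<rho>^j * E) \<partial>count_space (UNIV::nat set)) < \<infinity>"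
  proof -
    have sm: "summable (\<lambda>j. \<rho>^j * E)"
      using rho \<rho>0 by (intro summable_mult2 summable_geometric) (simp add: \<rho>_def)
    have "(\<integral>\<^sup>+j. ennreal (\<rho>^j * E) \<partial>count_space (UNIV::nat set)) = ennreal (\<Sum>j. \<rho>^j * E)"
      by (simp add: nn_integral_count_space_nat suminf_ennreal2[OF _ sm] \<rho>0 E0)
    then show ?thesis by simp
  qed
  have swp: "(\<integral>\<^sup>+n. \<integral>\<^sup>+j. ennreal (nwt \<kappa> \<epsilon> j n) \<partial>count_space UNIV \<partial>count_space UNIV)
      = (\<integral>\<^sup>+j. ennreal (\<rho>^j * E) \<partial>count_space (UNIV::nat set))"
  proof -
    have "(\<integral>\<^sup>+n. \<integral>\<^sup>+j. ennreal (nwt \<kappa> \<epsilon> j n) \<partial>count_space UNIV \<partial>count_space UNIV)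
      = (\<integral>\<^sup>+j. \<integral>\<^sup>+n. ennreal (nwt \<kappa> \<epsilon> j n) \<partial>count_space UNIV \<partial>count_space (UNIV::nat set))"
      by (rule nn_count_swap)
    also have "\<dots> = (\<integral>\<^sup>+j. ennreal (\<rho>^j * E) \<partial>count_space (UNIV::nat set))"
      by (rule nn_integral_cong) (use cj nn_count_eq_infsum[OF nw0 nws] in simp)
    finally show ?thesis .
  qed
  have fin_n: "(\<integral>\<^sup>+j. ennreal (nwt \<kappa> \<epsilon> j n) \<partial>count_space UNIV) < \<infinity>" for n
    using nn_count_single[of "\<lambda>n. \<integral>\<^sup>+j. ennreal (nwt \<kappa> \<epsilon> j n) \<partial>count_space UNIV" n] swp geo
    by (simp add: le_less_trans)
  have jsum: "(\<lambda>j. nwt \<kappa> \<epsilon> j n) summable_on UNIV" for n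
    by (rule nn_count_finite_summable[OF _ fin_n]) (rule nw0)
  have Wn: "ennreal (W n) = (\<integral>\<^sup>+j. ennreal (nwt \<kappa> \<epsilon> j n) \<partial>count_space UNIV)" for n
    unfolding W_def by (rule nn_count_eq_infsum[symmetric]) (use nw0 jsum in auto)
  have W0: "\<And>n. 0 \<le> W n" unfolding W_def by (rule infsum_nonneg) (use nw0 in auto)
  have Ws: "W summable_on UNIV"
    by (rule nn_count_finite_summable[OF W0]) (use swp geo in \<open>simp add: Wn\<close>)
  have yabs: "(\<lambda>j. norm (nser \<tau> k e j n s)) summable_on UNIV" for n s
    by (rule summable_on_comparison_test[OF jsum]) (use cj in \<open>auto simp: cdom_def\<close>)
  have ymeas: "y n \<in> borel_measurable borel" for n
    unfolding y_def by (rule measurable_infsum) (use cj in \<open>auto simp: cdom_def\<close>)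
  have ybound: "norm (y n s) \<le> W n" for n s
  proof -
    have "norm (y n s) \<le> infsum (\<lambda>j. norm (nser \<tau> k e j n s)) UNIV"
      unfolding y_def by (rule norm_infsum_bound) (use yabs in simp)
    also have "\<dots> \<le> W n"
      unfolding W_def by (rule infsum_mono[OF yabs jsum]) (use cj in \<open>auto simp: cdom_def\<close>)
    finally show ?thesis .
  qed
  show cy: "cdom y W" unfolding cdom_def using ymeas ybound Ws by blast
  show "y n s = e n s + tconv \<tau> k y n s" for n s
  proof -
    define P where "P = (\<lambda>m j. k m s * nser \<tau> k e j (n - m) (s - of_int m * \<tau>))"
    define Q where "Q = (\<lambda>(m, j). \<kappa> m * nwt \<kappa> \<epsilon> j (n - m))"
    have Q0: "\<And>p. 0 \<le> Q p" using k0 nw0 by (auto simp: Q_def)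
    have PQ: "norm (P m j) \<le> Q (m, j)" for m j
      unfolding P_def Q_def norm_mult using ck cj k0
      by (auto simp: cdom_def intro!: mult_mono)
    have "(\<integral>\<^sup>+p. ennreal (Q p) \<partial>count_space UNIV)
        = (\<integral>\<^sup>+m. \<integral>\<^sup>+j. ennreal (Q (m, j)) \<partial>count_space UNIV \<partial>count_space UNIV)"
      by (rule nn_count_pair)
    also have "\<dots> = (\<integral>\<^sup>+m. ennreal (\<kappa> m * W (n - m)) \<partial>count_space UNIV)"
    proof (rule nn_integral_cong)
      fix m
      have "(\<integral>\<^sup>+j. ennreal (Q (m, j)) \<partial>count_space UNIV)
          = (\<integral>\<^sup>+j. ennreal (\<kappa> m) * ennreal (nwt \<kappa> \<epsilon> j (n - m)) \<partial>count_space UNIV)"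
        by (rule nn_integral_cong) (simp add: Q_def ennreal_mult k0 nw0)
      also have "\<dots> = ennreal (\<kappa> m) * ennreal (W (n - m))"
        by (subst nn_integral_cmult) (auto simp: Wn)
      finally show "(\<integral>\<^sup>+j. ennreal (Q (m, j)) \<partial>count_space UNIV) = ennreal (\<kappa> m * W (n - m))"
        by (simp add: ennreal_mult k0 W0)
    qed
    also have "\<dots> = ennreal (infsum (\<lambda>m. \<kappa> m * W (n - m)) UNIV)"
      by (rule nn_count_eq_infsum) (use k0 W0 conv_term_summable[OF k0 W0 ks Ws] in auto)
    finally have Qfin: "(\<integral>\<^sup>+p. ennreal (Q p) \<partial>count_space UNIV) < \<infinity>" by simp
    have Qs: "Q summable_on UNIV" by (rule nn_count_finite_summable[OF Q0 Qfin])
    have Pa: "(\<lambda>(m, j). norm (P m j)) summable_on UNIV"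
      by (rule summable_on_comparison_test[OF Qs]) (use PQ Q0 in auto)
    have Ps: "(\<lambda>(m, j). P m j) summable_on (UNIV \<times> UNIV)"
      using abs_summable_summable[of "\<lambda>(m, j). P m j"] Pa by (simp add: case_prod_beta')
    have "tconv \<tau> k y n s = infsum (\<lambda>m. infsum (\<lambda>j. P m j) UNIV) UNIV"
      unfolding tconv_def y_def P_def by (simp add: infsum_cmult_right')
    also have "\<dots> = infsum (\<lambda>j. infsum (\<lambda>m. P m j) UNIV) UNIV"
      by (rule infsum_swap_banach[OF Ps])
    also have "\<dots> = infsum (\<lambda>j. nser \<tau> k e (Suc j) n s) UNIV"
      unfolding P_def by (simp add: tconv_def)
    finally have t: "tconv \<tau> k y n s = infsum (\<lambda>j. nser \<tau> k e (Suc j) n s) UNIV" .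
    have "y n s = nser \<tau> k e 0 n s + infsum (\<lambda>j. nser \<tau> k e (Suc j) n s) UNIV"
      unfolding y_def by (rule infsum_nat_shift) (rule abs_summable_summable[OF yabs])
    then show ?thesis using t by simp
  qed
qed

lemma infsum_delta:
  fixes x :: "'b::{topological_comm_monoid_add, t2_space}"
  shows "infsum (\<lambda>m. if m = a then x else 0) UNIV = x"
proof -
  have "infsum (\<lambda>m. if m = a then x else 0) UNIV = infsum (\<lambda>m. if m = a then x else 0) {a}"
    by (rule infsum_cong_neutral) auto
  then show ?thesis by simp
qed

lemma wop_delta:
  "wop \<tau> (\<lambda>n s. if n = 0 then 1 else 0) h s = h s"
proof -
  have "wop \<tau> (\<lambda>n s. if n = 0 then 1 else 0) h s = infsum (\<lambda>m::int. if m = 0 then h s else 0) UNIV"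
    unfolding wop_def by (rule infsum_cong) auto
  then show ?thesis using infsum_delta[of 0 "h s"] by simp
qed

lemma L2_lin:
  assumes f: "f \<in> L2" and g: "g \<in> L2"
  shows "(\<lambda>s. a * f s + g s) \<in> L2"
proof -
  have [measurable]: "f \<in> borel_measurable borel" "g \<in> borel_measurable borel"
    using f g by (auto simp: L2_def)
  have i: "integrable lborel (\<lambda>t. 2 * (cmod a)^2 * (cmod (f t))^2 + 2 * (cmod (g t))^2)"
    using f g by (auto simp: L2_def)
  have "integrable lborel (\<lambda>t. (cmod (a * f t + g t))^2)"
  proof (rule Bochner_Integration.integrable_bound[OF i])
    show "(\<lambda>t. (cmod (a * f t + g t))^2) \<in> borel_measurable lborel" by measurable
    show "AE x in lborel. norm ((cmod (a * f x + g x))^2) \<le> norm (2 * (cmod a)^2 * (cmod (f x))^2 + 2 * (cmod (g x))^2)"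
    proof (intro AE_I2)
      fix x
      have t: "cmod (a * f x + g x) \<le> cmod a * cmod (f x) + cmod (g x)"
        using norm_triangle_ineq[of "a * f x" "g x"] by (simp add: norm_mult)
      have "(cmod (a * f x + g x))^2 \<le> (cmod a * cmod (f x) + cmod (g x))^2"
        using t by (simp add: power_mono)
      also have "\<dots> \<le> 2 * (cmod a)^2 * (cmod (f x))^2 + 2 * (cmod (g x))^2"
      proof -
        have sq: "(p + q)^2 \<le> 2 * p^2 + 2 * q^2" for p q :: real
        proof -
          have "0 \<le> (p - q)^2" by simp
          then show ?thesis by (simp add: power2_eq_square algebra_simps)
        qed
        show ?thesis using sq[of "cmod a * cmod (f x)" "cmod (g x)"] by (simp add: power_mult_distrib)
      qed
      finally show "norm ((cmod (a * f x + g x))^2) \<le> norm (2 * (cmod a)^2 * (cmod (f x))^2 + 2 * (cmod (g x))^2)"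
        by simp
    qed
  qed
  then show ?thesis by (simp add: L2_def)
qed

lemma l2norm_zero_AE:
  assumes u: "u \<in> L2" and z: "l2norm u = 0"
  shows "AE s in lborel. u s = 0"
proof -
  have i: "integrable lborel (\<lambda>t. (cmod (u t))^2)" using u by (simp add: L2_def)
  have "(\<integral>t. (cmod (u t))^2 \<partial>lborel) = 0"
    using z unfolding l2norm_def by simp
  then have "AE t in lborel. (cmod (u t))^2 = 0"
    using integral_nonneg_eq_0_iff_AE[OF i] by simp
  then show ?thesis by simp
qed

lemma l2norm_sq: "h \<in> L2 \<Longrightarrow> (l2norm h)^2 = (\<integral>t. (cmod (h t))^2 \<partial>lborel)"
  unfolding l2norm_def by (simp add: integral_nonneg)

lemma l2norm_nonneg: "0 \<le> l2norm h"
  unfolding l2norm_def by simp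

lemma wop_split0:
  fixes \<tau> :: real
  assumes cd: "cdom c w"
    and sm: "(\<lambda>m. w m * cmod (h (s - of_int m * \<tau>))) summable_on UNIV"
  shows "wop \<tau> c h s = c 0 s * h s + wop \<tau> (\<lambda>m s. if m = 0 then 0 else c m s) h s"
proof -
  have s1: "(\<lambda>m. (if m = 0 then 0 else c m s) * h (s - of_int m * \<tau>)) summable_on UNIV"
  proof -
    have "(\<lambda>m. norm (c m s * h (s - of_int m * \<tau>))) summable_on UNIV" by (rule wop_term_abs(1)[OF cd sm])
    then have "(\<lambda>m. norm ((if m = 0 then 0 else c m s) * h (s - of_int m * \<tau>))) summable_on UNIV"
      by (rule summable_on_comparison_test) auto
    then show ?thesis by (rule abs_summable_summable)
  qed
  have s0: "(\<lambda>m::int. if m = 0 then c 0 s * h s else 0) summable_on UNIV"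
    by (rule finite_nonzero_values_imp_summable_on) auto
  have "wop \<tau> c h s = infsum (\<lambda>m. (if m = 0 then c 0 s * h s else 0) + (if m = 0 then 0 else c m s) * h (s - of_int m * \<tau>)) UNIV"
    unfolding wop_def by (rule infsum_cong) auto
  also have "\<dots> = infsum (\<lambda>m::int. if m = 0 then c 0 s * h s else 0) UNIV + wop \<tau> (\<lambda>m s. if m = 0 then 0 else c m s) h s"
    unfolding wop_def by (rule infsum_add[OF s0 s1])
  also have "infsum (\<lambda>m::int. if m = 0 then c 0 s * h s else 0) UNIV = c 0 s * h s"
    by (rule infsum_delta)
  finally show ?thesis .
qed

lemma wop_injective:
  fixes \<tau> :: real
  assumes cd: "cdom c w" and mu: "0 < \<mu>" and c0: "\<And>s. \<mu> \<le> norm (c 0 s)"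
    and small: "infsum (\<lambda>m. if m = 0 then 0 else w m) UNIV < \<mu>"
    and u: "u \<in> L2" and z: "AE s in lborel. wop \<tau> c u s = 0"
  shows "AE s in lborel. u s = 0"
proof -
  define r where "r = (\<lambda>m s. if m = (0::int) then 0 else c m s)"
  define wr where "wr = (\<lambda>m. if m = (0::int) then 0 else w m)"
  have w0: "\<And>m. 0 \<le> w m" using cdom_nonneg[OF cd] .
  have cr: "cdom r wr"
    unfolding cdom_def
  proof (intro conjI allI)
    show "r m \<in> borel_measurable borel" for m using cd by (cases "m = 0") (auto simp: r_def cdom_def)
    show "norm (r m s) \<le> wr m" for m s using cd by (auto simp: r_def wr_def cdom_def)
    show "wr summable_on UNIV"
    proof -
      have "w summable_on UNIV" using cd by (simp add: cdom_def)
      then show ?thesis unfolding wr_def by (rule summable_on_comparison_test) (use w0 in auto)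
    qed
  qed
  define \<sigma> where "\<sigma> = infsum wr UNIV"
  have sig0: "0 \<le> \<sigma>" unfolding \<sigma>_def by (rule infsum_nonneg) (use cdom_nonneg[OF cr] in auto)
  have sig: "\<sigma> < \<mu>" using small by (simp add: \<sigma>_def wr_def)
  have rL: "wop \<tau> r u \<in> L2" and rb: "l2norm (wop \<tau> r u) \<le> \<sigma> * l2norm u"
    using wop_L2[OF cr u, of \<tau>] by (auto simp: \<sigma>_def)
  have pt: "AE s in lborel. (cmod (u s))^2 \<le> (cmod (wop \<tau> r u s))^2 / \<mu>^2"
    using z wop_AE_fin[OF cd u, of \<tau>]
  proof eventually_elim
    case (elim s)
    have "c 0 s * u s = - wop \<tau> r u s"
      using wop_split0[OF cd elim(2)] elim(1) by (simp add: r_def add_eq_0_iff)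
    then have "norm (c 0 s * u s) = norm (- wop \<tau> r u s)" by (simp only:)
    then have "norm (c 0 s) * cmod (u s) = cmod (wop \<tau> r u s)"
      by (simp add: norm_mult)
    moreover have "\<mu> * cmod (u s) \<le> norm (c 0 s) * cmod (u s)"
      by (rule mult_right_mono[OF c0 norm_ge_zero])
    ultimately have "\<mu> * cmod (u s) \<le> cmod (wop \<tau> r u s)" by simp
    then have "(\<mu> * cmod (u s))^2 \<le> (cmod (wop \<tau> r u s))^2"
      using mu by (intro power_mono) auto
    then show ?case using mu by (simp add: field_simps power_mult_distrib)
  qed
  have "(l2norm u)^2 \<le> (l2norm (wop \<tau> r u))^2 / \<mu>^2"
  proof -
    have "(l2norm u)^2 = (\<integral>t. (cmod (u t))^2 \<partial>lborel)" by (rule l2norm_sq[OF u])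
    also have "\<dots> \<le> (\<integral>t. (cmod (wop \<tau> r u t))^2 / \<mu>^2 \<partial>lborel)"
      by (rule integral_mono_AE) (use u rL pt in \<open>auto simp: L2_def\<close>)
    also have "\<dots> = (l2norm (wop \<tau> r u))^2 / \<mu>^2"
      by (simp add: l2norm_sq[OF rL])
    finally show ?thesis .
  qed
  also have "\<dots> \<le> (\<sigma> * l2norm u)^2 / \<mu>^2"
    using rb l2norm_nonneg[of "wop \<tau> r u"] by (intro divide_right_mono power_mono) auto
  finally have "(l2norm u)^2 * \<mu>^2 \<le> (\<sigma> * l2norm u)^2" using mu by (simp add: field_simps)
  then have "(l2norm u * \<mu>)^2 \<le> (\<sigma> * l2norm u)^2" by (simp add: power_mult_distrib)
  then have le: "l2norm u * \<mu> \<le> \<sigma> * l2norm u"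
    by (rule power2_le_imp_le) (use sig0 l2norm_nonneg[of u] in simp)
  have "l2norm u = 0"
  proof (rule ccontr)
    assume "l2norm u \<noteq> 0"
    then have p: "0 < l2norm u" using l2norm_nonneg[of u] by simp
    have "l2norm u * \<mu> \<le> l2norm u * \<sigma>" using le by (simp add: mult.commute)
    then have "\<mu> \<le> \<sigma>" using p by simp
    then show False using sig by simp
  qed
  then show ?thesis by (rule l2norm_zero_AE[OF u])
qed

lemma wop_right_inverse:
  fixes \<tau> :: real
  assumes cd: "cdom c w" and mu: "0 < \<mu>" and c0: "\<And>s. \<mu> \<le> norm (c 0 s)"
    and small: "infsum (\<lambda>m. if m = 0 then 0 else w m) UNIV < \<mu>"
  shows "\<exists>y W. cdom y W \<and> (\<forall>n s. tconv \<tau> c y n s = (if n = 0 then 1 else 0))"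
proof -
  have w0: "\<And>m. 0 \<le> w m" using cdom_nonneg[OF cd] .
  have ws: "w summable_on UNIV" using cd by (simp add: cdom_def)
  have cm: "\<And>m. c m \<in> borel_measurable borel" using cd by (simp add: cdom_def)
  have cb: "\<And>m s. norm (c m s) \<le> w m" using cd by (simp add: cdom_def)
  have cnz: "c 0 s \<noteq> 0" for s
  proof
    assume "c 0 s = 0"
    then show False using c0[of s] mu by simp
  qed
  define wr where "wr = (\<lambda>m. if m = (0::int) then 0 else w m)"
  have wrs: "wr summable_on UNIV"
    using ws unfolding wr_def by (rule summable_on_comparison_test) (use w0 in auto)
  define k where "k = (\<lambda>m s. if m = (0::int) then 0 else - c m s / c 0 s)"
  define \<kappa> where "\<kappa> = (\<lambda>m. wr m * inverse \<mu>)"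
  have ck: "cdom k \<kappa>"
    unfolding cdom_def
  proof (intro conjI allI)
    show "k m \<in> borel_measurable borel" for m
    proof (cases "m = 0")
      case False
      have [measurable]: "c m \<in> borel_measurable borel" "c 0 \<in> borel_measurable borel" using cm by auto
      show ?thesis using False unfolding k_def by simp
    qed (simp add: k_def)
    show "norm (k m s) \<le> \<kappa> m" for m s
    proof (cases "m = 0")
      case False
      have "norm (k m s) = norm (c m s) / norm (c 0 s)" using False by (simp add: k_def norm_divide)
      also have "\<dots> \<le> w m / \<mu>"
        by (rule frac_le) (use w0 cb c0 mu in auto)
      finally show ?thesis using False by (simp add: \<kappa>_def wr_def field_simps)
    qed (simp add: k_def \<kappa>_def wr_def)
    show "\<kappa> summable_on UNIV" unfolding \<kappa>_def by (rule summable_on_cmult_left[OF wrs])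
  qed
  have rho: "infsum \<kappa> UNIV < 1"
  proof -
    have "infsum \<kappa> UNIV = infsum wr UNIV * inverse \<mu>"
      unfolding \<kappa>_def by (rule infsum_cmult_left[OF wrs])
    also have "\<dots> < 1" using small mu by (simp add: wr_def field_simps)
    finally show ?thesis .
  qed
  define e where "e = (\<lambda>n s. if n = (0::int) then 1 / c 0 s else 0)"
  define \<epsilon> where "\<epsilon> = (\<lambda>n. if n = (0::int) then 1 / \<mu> else 0)"
  have ce: "cdom e \<epsilon>"
    unfolding cdom_def
  proof (intro conjI allI)
    show "e m \<in> borel_measurable borel" for m
    proof (cases "m = 0")
      case True
      have [measurable]: "c 0 \<in> borel_measurable borel" using cm by auto
      show ?thesis using True unfolding e_def by simp
    qed (simp add: e_def)
    show "norm (e m s) \<le> \<epsilon> m" for m s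
    proof (cases "m = 0")
      case True
      have "1 / norm (c 0 s) \<le> 1 / \<mu>" by (rule frac_le) (use c0[of s] mu in auto)
      then show ?thesis using True by (simp add: e_def \<epsilon>_def norm_divide)
    qed (simp add: e_def \<epsilon>_def)
    show "\<epsilon> summable_on UNIV"
      by (rule finite_nonzero_values_imp_summable_on) (auto simp: \<epsilon>_def)
  qed
  define y where "y \<equiv> (\<lambda>n s. infsum (\<lambda>j. nser \<tau> k e j n s) UNIV)"
  define W where "W \<equiv> (\<lambda>n. infsum (\<lambda>j. nwt \<kappa> \<epsilon> j n) UNIV)"
  have cy: "cdom y W"
    unfolding y_def W_def by (rule neumann_fix(1)[OF ck ce rho])
  have fx: "\<And>n s. y n s = e n s + tconv \<tau> k y n s"
    unfolding y_def by (rule neumann_fix(2)[OF ck ce rho])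
  have W0: "\<And>m. 0 \<le> W m" using cdom_nonneg[OF cy] .
  have Ws: "W summable_on UNIV" using cy by (simp add: cdom_def)
  have k0: "\<And>m. 0 \<le> \<kappa> m" using cdom_nonneg[OF ck] .
  have ks: "\<kappa> summable_on UNIV" using ck by (simp add: cdom_def)
  have id: "tconv \<tau> c y n s = (if n = 0 then 1 else 0)" for n s
  proof -
    define D where "D = (\<lambda>m. if m = (0::int) then y n s else 0)"
    define K where "K = (\<lambda>m. k m s * y (n - m) (s - of_int m * \<tau>))"
    have Ka: "(\<lambda>m. norm (K m)) summable_on UNIV"
    proof (rule summable_on_comparison_test[OF conv_term_summable[OF k0 W0 ks Ws, of n]])
      fix m show "norm (K m) \<le> \<kappa> m * W (n - m)"
        using ck cy k0 unfolding K_def cdom_def norm_mult by (auto intro!: mult_mono)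
    qed simp
    have Ks: "K summable_on UNIV" by (rule abs_summable_summable[OF Ka])
    have Ds: "D summable_on UNIV"
      by (rule finite_nonzero_values_imp_summable_on) (auto simp: D_def)
    have trm: "c m s * y (n - m) (s - of_int m * \<tau>) = c 0 s * (D m - K m)" for m
    proof (cases "m = 0")
      case False
      have "c 0 s * (D m - K m) = c 0 s * (c m s / c 0 s) * y (n - m) (s - of_int m * \<tau>)"
        using False by (simp add: D_def K_def k_def)
      also have "c 0 s * (c m s / c 0 s) = c m s" using cnz[of s] by simp
      finally show ?thesis by simp
    qed (simp add: D_def K_def k_def)
    have "tconv \<tau> c y n s = infsum (\<lambda>m. c 0 s * (D m - K m)) UNIV"
      unfolding tconv_def by (simp add: trm)
    also have "\<dots> = c 0 s * (infsum D UNIV - infsum K UNIV)"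
    proof -
      have "infsum (\<lambda>m. D m + - K m) UNIV = infsum D UNIV + infsum (\<lambda>m. - K m) UNIV"
        by (rule infsum_add[OF Ds]) (use Ks summable_on_uminus in blast)
      then show ?thesis by (simp add: infsum_cmult_right' infsum_uminus)
    qed
    also have "infsum D UNIV = y n s" unfolding D_def by (rule infsum_delta)
    also have "infsum K UNIV = tconv \<tau> k y n s" unfolding K_def tconv_def ..
    also have "y n s - tconv \<tau> k y n s = e n s" using fx[of n s] by simp
    finally show ?thesis using cnz[of s] by (simp add: e_def)
  qed
  show ?thesis using cy id by blast
qed

lemma wop_invertible:
  fixes \<tau> :: real
  assumes cd: "cdom c w" and mu: "0 < \<mu>" and c0: "\<And>s. \<mu> \<le> norm (c 0 s)"
    and small: "infsum (\<lambda>m. if m = 0 then 0 else w m) UNIV < \<mu>"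
  shows "invertible_op (wop \<tau> c)"
proof -
  obtain y W where cy: "cdom y W" and id: "\<And>n s. tconv \<tau> c y n s = (if n = 0 then 1 else 0)"
    using wop_right_inverse[OF cd mu c0 small, of \<tau>] by blast
  have bT: "bounded_op (wop \<tau> c)" by (rule wop_bounded[OF cd])
  have bS: "bounded_op (wop \<tau> y)" by (rule wop_bounded[OF cy])
  have TS: "AE t in lborel. wop \<tau> c (wop \<tau> y h) t = h t" if h: "h \<in> L2" for h
  proof -
    have "AE t in lborel. wop \<tau> c (wop \<tau> y h) t = wop \<tau> (tconv \<tau> c y) h t"
      by (rule wop_comp[OF cd cy h])
    moreover have "wop \<tau> (tconv \<tau> c y) h t = h t" for t
      using wop_delta[of \<tau> h t] by (simp add: id[abs_def])
    ultimately show ?thesis by simp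
  qed
  have ST: "AE t in lborel. wop \<tau> y (wop \<tau> c h) t = h t" if h: "h \<in> L2" for h
  proof -
    define T where "T = wop \<tau> c"
    define S where "S = wop \<tau> y"
    have Th: "T h \<in> L2" using wop_L2(1)[OF cd h] by (simp add: T_def)
    have STh: "S (T h) \<in> L2" using wop_L2(1)[OF cy Th] by (simp add: S_def)
    define u where "u = (\<lambda>s. (-1) * h s + S (T h) s)"
    have u: "u \<in> L2" unfolding u_def by (rule L2_lin[OF h STh])
    have lin0: "\<forall>h\<in>L2. \<forall>k\<in>L2. \<forall>a. AE t in lborel. T (\<lambda>s. a * h s + k s) t = a * T h t + T k t"
      using bT unfolding bounded_op_def T_def by (elim conjE)
    have lin: "AE t in lborel. T u t = (-1) * T h t + T (S (T h)) t"
      using lin0 h STh unfolding u_def by blast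
    have ts: "AE t in lborel. T (S (T h)) t = T h t"
      using TS[OF Th] by (simp add: T_def S_def)
    have "AE t in lborel. T u t = 0" using lin ts by eventually_elim simp
    then have "AE t in lborel. u t = 0"
      using wop_injective[OF cd mu c0 small u] by (simp add: T_def)
    then show ?thesis by eventually_elim (simp add: u_def S_def T_def)
  qed
  show ?thesis
    unfolding invertible_op_def
    by (intro conjI exI[of _ "wop \<tau> y"] bT bS ballI TS ST)
qed

lemma int_sym_has_sum:
  fixes f :: "nat \<Rightarrow> real"
  assumes f: "(f has_sum s) UNIV"
  shows "((\<lambda>j::int. if j = 0 then 0 else f (nat \<bar>j\<bar> - 1)) has_sum (2 * s)) UNIV"
proof -
  define F where "F = (\<lambda>j::int. if j = 0 then 0 else f (nat \<bar>j\<bar> - 1))"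
  have P: "(F has_sum s) (range (\<lambda>n::nat. int n + 1))"
  proof (subst has_sum_reindex)
    show "inj_on (\<lambda>n::nat. int n + 1) UNIV" by (auto simp: inj_on_def)
    have "F \<circ> (\<lambda>n::nat. int n + 1) = f" by (auto simp: F_def o_def nat_add_distrib)
    then show "((F \<circ> (\<lambda>n::nat. int n + 1)) has_sum s) UNIV" using f by simp
  qed
  have N: "(F has_sum s) (range (\<lambda>n::nat. - int n - 1))"
  proof (subst has_sum_reindex)
    show "inj_on (\<lambda>n::nat. - int n - 1) UNIV" by (auto simp: inj_on_def)
    have "F \<circ> (\<lambda>n::nat. - int n - 1) = f" by (auto simp: F_def o_def nat_add_distrib)
    then show "((F \<circ> (\<lambda>n::nat. - int n - 1)) has_sum s) UNIV" using f by simp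
  qed
  have U: "(F has_sum (s + s)) (range (\<lambda>n::nat. int n + 1) \<union> range (\<lambda>n::nat. - int n - 1))"
    by (rule has_sum_Un_disjoint[OF P N]) auto
  have cover: "j \<in> range (\<lambda>n::nat. int n + 1) \<union> range (\<lambda>n::nat. - int n - 1)" if "j \<noteq> 0" for j :: int
  proof (cases "j > 0")
    case True
    then have "j = int (nat j - 1) + 1" by simp
    then show ?thesis by blast
  next
    case False
    with that have "j = - int (nat (- j) - 1) - 1" by simp
    then show ?thesis by blast
  qed
  have "(F has_sum (s + s)) UNIV"
    using U by (subst (asm) has_sum_cong_neutral[where T=UNIV and g=F]) (use cover in \<open>auto simp: F_def\<close>)
  then show ?thesis by (simp add: F_def)
qed

lemma geo_has_sum:
  fixes q r :: real
  assumes "0 \<le> q" "0 \<le> r" "r < 1"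
  shows "((\<lambda>n. q * r ^ n) has_sum (q / (1 - r))) UNIV"
proof -
  have "(\<lambda>n. q * r ^ n) sums (q * (1 / (1 - r)))"
    by (rule sums_mult) (rule geometric_sums, use assms in simp)
  then show ?thesis by (intro sums_nonneg_imp_has_sum) (use assms in auto)
qed

lemma infsum_split0:
  fixes f :: "int \<Rightarrow> 'a::{topological_ab_group_add, t2_space}"
  assumes "f summable_on UNIV"
  shows "infsum f UNIV = f 0 + infsum (\<lambda>j. if j = 0 then 0 else f j) UNIV"
proof -
  have s0: "(\<lambda>j::int. if j = 0 then f 0 else 0) summable_on UNIV"
    by (rule finite_nonzero_values_imp_summable_on) auto
  have s1: "(\<lambda>j. if j = 0 then 0 else f j) summable_on UNIV"
  proof -
    have "(\<lambda>j. f j + - (if j = 0 then f 0 else 0)) summable_on UNIV"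
      by (rule summable_on_add[OF assms summable_on_uminus[THEN iffD2, OF s0]])
    moreover have "(\<lambda>j. f j + - (if j = 0 then f 0 else 0)) = (\<lambda>j. if j = 0 then 0 else f j)"
      by auto
    ultimately show ?thesis by simp
  qed
  have "infsum f UNIV = infsum (\<lambda>j. (if j = 0 then f 0 else 0) + (if j = 0 then 0 else f j)) UNIV"
    by (rule infsum_cong) auto
  also have "\<dots> = infsum (\<lambda>j::int. if j = 0 then f 0 else 0) UNIV + infsum (\<lambda>j. if j = 0 then 0 else f j) UNIV"
    by (rule infsum_add[OF s0 s1])
  also have "infsum (\<lambda>j::int. if j = 0 then f 0 else 0) UNIV = f 0" by (rule infsum_delta)
  finally show ?thesis .
qed

definition qq :: "real \<Rightarrow> real" where "qq a = exp (- pi / (2 * a))"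

definition tt :: "real \<Rightarrow> real" where
  "tt a = infsum (\<lambda>j. if j = 0 then 0 else alpha_coef a j) UNIV"

lemma alpha_pos: "0 < alpha_coef a j" by (simp add: alpha_coef_def)

lemma alpha_0: "alpha_coef a 0 = 1" by (simp add: alpha_coef_def)

lemma qq_pos: "0 < qq a" by (simp add: qq_def)

lemma qq_lt1: "0 < a \<Longrightarrow> qq a < 1" by (simp add: qq_def)

lemma alpha_pow: "alpha_coef a j = qq a ^ (nat (j^2))"
proof -
  have r: "real (nat (j^2)) = of_int (j^2)" by simp
  have "qq a ^ (nat (j^2)) = exp (real (nat (j^2)) * (- pi / (2 * a)))"
    unfolding qq_def by (simp only: exp_of_nat_mult)
  also have "real (nat (j^2)) * (- pi / (2 * a)) = - pi * of_int (j^2) / (2 * a)"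
    by (simp only: r) (simp add: field_simps)
  finally show ?thesis unfolding alpha_coef_def by simp
qed

lemma alpha_le:
  assumes a: "0 < a" and j: "j \<noteq> 0"
  shows "alpha_coef a j \<le> qq a * (qq a ^ 3) ^ (nat \<bar>j\<bar> - 1)"
proof -
  define n where "n = nat \<bar>j\<bar>"
  have n1: "1 \<le> n" using j by (simp add: n_def)
  have j2: "nat (j^2) = n^2"
    unfolding n_def by (simp add: nat_power_eq[symmetric])
  have e: "qq a * (qq a ^ 3) ^ (n - 1) = qq a ^ (3 * n - 2)"
  proof -
    have "qq a * (qq a ^ 3) ^ (n - 1) = qq a ^ (1 + 3 * (n - 1))"
      by (simp add: power_mult power_add)
    also have "1 + 3 * (n - 1) = 3 * n - 2" using n1 by simp
    finally show ?thesis .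
  qed
  have le: "3 * n - 2 \<le> n^2"
  proof -
    have "int (3 * n - 2) = 3 * int n - 2" using n1 by (simp add: of_nat_diff)
    moreover have "3 * int n - 2 \<le> int n ^ 2"
    proof -
      have "0 \<le> (int n - 1) * (int n - 2) \<or> n = 1"
        using n1 by (cases "n = 1") (auto intro!: mult_nonneg_nonneg)
      then show ?thesis by (auto simp: power2_eq_square algebra_simps)
    qed
    ultimately show ?thesis by (metis of_nat_le_iff of_nat_power)
  qed
  have "alpha_coef a j = qq a ^ (n^2)" by (simp add: alpha_pow j2)
  also have "\<dots> \<le> qq a ^ (3 * n - 2)"
    by (rule power_decreasing[OF le]) (use qq_pos[of a] qq_lt1[OF a] in auto)
  finally show ?thesis using e by (simp add: n_def)
qed

lemma tt_props:
  assumes a: "0 < a"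
  shows "(\<lambda>j. if j = 0 then 0 else alpha_coef a j) summable_on UNIV"
    "alpha_coef a summable_on UNIV"
    "tt a \<le> 2 * (qq a / (1 - qq a ^ 3))"
    "infsum (alpha_coef a) UNIV = 1 + tt a"
    "0 \<le> tt a"
proof -
  define q where "q = qq a"
  have q0: "0 \<le> q" using qq_pos[of a] by (simp add: q_def)
  have q1: "q < 1" using qq_lt1[OF a] by (simp add: q_def)
  have r1: "q ^ 3 < 1" using q0 q1 by (simp add: power_less_one_iff)
  have g: "((\<lambda>n. q * (q^3) ^ n) has_sum (q / (1 - q^3))) UNIV"
    by (rule geo_has_sum) (use q0 r1 in auto)
  have phi: "((\<lambda>j::int. if j = 0 then 0 else q * (q^3) ^ (nat \<bar>j\<bar> - 1)) has_sum (2 * (q / (1 - q^3)))) UNIV"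
    using int_sym_has_sum[OF g] by simp
  have le: "(if j = 0 then 0 else alpha_coef a j) \<le> (if j = 0 then 0 else q * (q^3) ^ (nat \<bar>j\<bar> - 1))" for j
    using alpha_le[OF a] by (simp add: q_def)
  have nn: "0 \<le> (if j = 0 then 0 else alpha_coef a j)" for j
    using alpha_pos[of a j] by simp
  show s1: "(\<lambda>j. if j = 0 then 0 else alpha_coef a j) summable_on UNIV"
    by (rule summable_on_comparison_test[OF has_sum_imp_summable[OF phi]]) (use le nn in auto)
  have s0: "(\<lambda>j::int. if j = 0 then alpha_coef a 0 else 0) summable_on UNIV"
    by (rule finite_nonzero_values_imp_summable_on) auto
  have "(\<lambda>j. (if j = 0 then alpha_coef a 0 else 0) + (if j = 0 then 0 else alpha_coef a j)) summable_on UNIV"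
    by (rule summable_on_add[OF s0 s1])
  moreover have "(\<lambda>j. (if j = 0 then alpha_coef a 0 else 0) + (if j = 0 then 0 else alpha_coef a j)) = alpha_coef a"
    by auto
  ultimately show s2: "alpha_coef a summable_on UNIV" by simp
  show "tt a \<le> 2 * (qq a / (1 - qq a ^ 3))"
    unfolding tt_def using infsum_mono[OF s1 has_sum_imp_summable[OF phi] le] phi
    by (simp add: q_def infsumI)
  show "infsum (alpha_coef a) UNIV = 1 + tt a"
    using infsum_split0[OF s2] by (simp add: tt_def alpha_0)
  show "0 \<le> tt a" unfolding tt_def by (rule infsum_nonneg) (use nn in auto)
qed

lemma exp_165: "5 \<le> exp (1.65::real)"
proof -
  have "1 + 0.4125 + (0.4125::real)^2 / 2 \<le> exp 0.4125"
    by (rule exp_lower_Taylor_quadratic) simp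
  moreover have "(1.4975::real) \<le> 1 + 0.4125 + (0.4125::real)^2 / 2" by (simp add: power2_eq_square)
  ultimately have b: "1.4975 \<le> exp (0.4125::real)" by linarith
  have "(1.4975::real)^4 \<le> (exp 0.4125)^4"
    by (rule power_mono[OF b]) simp
  also have "(exp (0.4125::real))^4 = exp (1.65)"
    by (simp add: exp_of_nat_mult[symmetric])
  finally have "(1.4975::real)^4 \<le> exp 1.65" .
  moreover have "(5::real) \<le> 1.4975^4" by (simp add: power4_eq_xxxx)
  ultimately show ?thesis by linarith
qed

lemma qq_small:
  assumes "0 < a" "a \<le> 0.948"
  shows "qq a \<le> 1/5"
proof -
  have "3.3 * a \<le> 3.3 * 0.948" using assms by simp
  also have "\<dots> \<le> pi" using pi_approx by simp
  finally have "1.65 \<le> pi / (2 * a)" using assms by (simp add: field_simps)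
  then have "- pi / (2 * a) \<le> - 1.65" by simp
  then have "qq a \<le> exp (- 1.65)" unfolding qq_def by simp
  also have "exp (- 1.65::real) = 1 / exp 1.65" by (simp add: exp_minus field_simps)
  also have "\<dots> \<le> 1 / 5" using exp_165 by (simp add: divide_simps)
  finally show ?thesis .
qed

lemma tt_small:
  assumes "0 < a" "a \<le> 0.948"
  shows "tt a \<le> 0.41"
proof -
  define q where "q = qq a"
  have q0: "0 \<le> q" using qq_pos[of a] by (simp add: q_def)
  have q5: "q \<le> 1/5" using qq_small[OF assms] by (simp add: q_def)
  have "q^3 \<le> (1/5)^3" by (rule power_mono[OF q5 q0])
  moreover have "(1/5::real)^3 = 0.008" by (simp add: power3_eq_cube)
  ultimately have q3: "q^3 \<le> 0.008" by simp
  have "2 * (q / (1 - q^3)) \<le> 0.41"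
  proof -
    have d: "0 < 1 - q^3" using q3 by simp
    have "2 * q \<le> 0.41 * (1 - q^3)" using q5 q3 by simp
    then show ?thesis using d by (simp add: field_simps)
  qed
  then show ?thesis using tt_props(3)[OF assms(1)] by (simp add: q_def)
qed

definition cA :: "real \<Rightarrow> int \<Rightarrow> real \<Rightarrow> complex" where
  "cA a m s = complex_of_real (alpha_coef a m) * Phi a m s"

lemma a0_eq_wop: "a0 a = wop (1 / sqrt a) (cA a)"
  by (intro ext) (simp add: a0_def a0_term_def pi_adj_def wop_def cA_def)

lemma theta_term:
  assumes "0 < a"
  shows "exp (pi * \<i> * of_int (j^2) * (\<i> / complex_of_real (2 * a)) + 2 * pi * \<i> * of_int j * complex_of_real x)
       = complex_of_real (alpha_coef a j) * exp (2 * pi * \<i> * of_int j * complex_of_real x)"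
proof -
  have "pi * \<i> * of_int (j^2) * (\<i> / complex_of_real (2 * a)) = complex_of_real (- pi * of_int (j^2) / (2 * a))"
    using assms by (simp add: field_simps)
  then show ?thesis
    by (simp add: exp_add alpha_coef_def exp_of_real del: of_real_mult of_real_divide of_real_minus)
qed

lemma norm_exp_ij: "norm (exp (2 * pi * \<i> * of_int j * complex_of_real x)) = 1"
  by simp

lemma Phi_series:
  assumes "0 < a"
  shows "Phi a m s = infsum (\<lambda>j. complex_of_real (alpha_coef a j) *
     exp (2 * pi * \<i> * of_int j * complex_of_real (- s / sqrt a + of_int m / (2 * a)))) UNIV"
  unfolding Phi_def jtheta_def by (rule infsum_cong) (rule theta_term[OF assms])

lemma Phi_terms:
  assumes "0 < a"
  shows "(\<lambda>j. norm (complex_of_real (alpha_coef a j) *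
     exp (2 * pi * \<i> * of_int j * complex_of_real x))) = alpha_coef a"
proof
  fix j
  have "norm (exp (2 * pi * \<i> * of_int j * complex_of_real x)) = 1" by (rule norm_exp_ij)
  then show "norm (complex_of_real (alpha_coef a j) * exp (2 * pi * \<i> * of_int j * complex_of_real x)) = alpha_coef a j"
    using alpha_pos[of a j] by (simp only: norm_mult norm_of_real)
qed

lemma Phi_term_norm:
  assumes "0 < a"
  shows "norm (complex_of_real (alpha_coef a j) * exp (2 * pi * \<i> * of_int j * complex_of_real x)) = alpha_coef a j"
  using fun_cong[OF Phi_terms[OF assms, of x], of j] by simp

lemma Phi_bound:
  assumes a: "0 < a"
  shows "norm (Phi a m s) \<le> 1 + tt a"
proof -
  let ?f = "\<lambda>j. complex_of_real (alpha_coef a j) *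
     exp (2 * pi * \<i> * of_int j * complex_of_real (- s / sqrt a + of_int m / (2 * a)))"
  have n: "(\<lambda>j. norm (?f j)) = alpha_coef a" by (rule Phi_terms[OF a])
  have fa: "(\<lambda>j. norm (?f j)) summable_on UNIV" by (simp only: n) (rule tt_props(2)[OF a])
  have "norm (Phi a m s) \<le> infsum (\<lambda>j. norm (?f j)) UNIV"
    unfolding Phi_series[OF a] by (rule norm_infsum_bound) (rule fa)
  also have "\<dots> = 1 + tt a" by (simp only: n) (rule tt_props(4)[OF a])
  finally show ?thesis .
qed

lemma Phi0_lower:
  assumes a: "0 < a"
  shows "1 - tt a \<le> norm (Phi a 0 s)"
proof -
  let ?f = "\<lambda>j. complex_of_real (alpha_coef a j) *
     exp (2 * pi * \<i> * of_int j * complex_of_real (- s / sqrt a + of_int 0 / (2 * a)))"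
  have n: "(\<lambda>j. norm (?f j)) = alpha_coef a" by (rule Phi_terms[OF a])
  have fa: "(\<lambda>j. norm (?f j)) summable_on UNIV" by (simp only: n) (rule tt_props(2)[OF a])
  have fs: "?f summable_on UNIV" by (rule abs_summable_summable[OF fa])
  define R where "R = infsum (\<lambda>j. if j = 0 then 0 else ?f j) UNIV"
  have P: "Phi a 0 s = 1 + R"
    unfolding Phi_series[OF a] R_def using infsum_split0[OF fs] by (simp add: alpha_0)
  have nj: "norm (?f j) = alpha_coef a j" for j by (rule Phi_term_norm[OF a])
  have eqf: "(\<lambda>j. norm (if j = 0 then 0 else ?f j)) = (\<lambda>j. if j = 0 then 0 else alpha_coef a j)"
  proof (rule ext)
    fix j
    show "norm (if j = 0 then 0 else ?f j) = (if j = 0 then 0 else alpha_coef a j)"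
    proof (cases "j = 0")
      case True then show ?thesis by simp
    next
      case False then show ?thesis using nj[of j] by (simp only: if_False)
    qed
  qed
  have ra: "(\<lambda>j. norm (if j = 0 then 0 else ?f j)) summable_on UNIV"
    by (simp only: eqf) (rule tt_props(1)[OF a])
  have "norm R \<le> infsum (\<lambda>j. norm (if j = 0 then 0 else ?f j)) UNIV"
    unfolding R_def by (rule norm_infsum_bound) (use ra in simp)
  also have "\<dots> = tt a"
    unfolding tt_def by (simp only: eqf)
  finally have "norm R \<le> tt a" .
  moreover have "1 - norm R \<le> norm (1 + R)"
    using norm_triangle_ineq2[of 1 "- R"] by simp
  ultimately show ?thesis using P by simp
qed

lemma Phi_meas:
  assumes a: "0 < a"
  shows "Phi a m \<in> borel_measurable borel"
proof -
  have "(\<lambda>s. infsum (\<lambda>j. complex_of_real (alpha_coef a j) *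
     exp (2 * pi * \<i> * of_int j * complex_of_real (- s / sqrt a + of_int m / (2 * a)))) UNIV) \<in> borel_measurable borel"
    by (rule measurable_infsum, rule borel_measurable_continuous_onI) (use a in \<open>auto intro!: continuous_intros\<close>)
  moreover have "Phi a m = (\<lambda>s. infsum (\<lambda>j. complex_of_real (alpha_coef a j) *
     exp (2 * pi * \<i> * of_int j * complex_of_real (- s / sqrt a + of_int m / (2 * a)))) UNIV)"
    by (intro ext Phi_series[OF a])
  ultimately show ?thesis by simp
qed

lemma cA_cdom:
  assumes a: "0 < a"
  shows "cdom (cA a) (\<lambda>m. alpha_coef a m * (1 + tt a))"
  unfolding cdom_def
proof (intro conjI allI)
  show "cA a m \<in> borel_measurable borel" for m
  proof -
    have [measurable]: "Phi a m \<in> borel_measurable borel" by (rule Phi_meas[OF a])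
    show ?thesis unfolding cA_def[abs_def] by measurable
  qed
  show "norm (cA a m s) \<le> alpha_coef a m * (1 + tt a)" for m s
    unfolding cA_def norm_mult using Phi_bound[OF a, of m s] alpha_pos[of a m]
    by (simp add: mult_left_mono)
  show "(\<lambda>m. alpha_coef a m * (1 + tt a)) summable_on UNIV"
    by (rule summable_on_cmult_left[OF tt_props(2)[OF a]])
qed

theorem a0_invertible:
  assumes a: "0 < a" and a1: "a \<le> 0.948"
  shows "bounded_op (a0 a)" "invertible_op (a0 a)"
proof -
  have cd: "cdom (cA a) (\<lambda>m. alpha_coef a m * (1 + tt a))" by (rule cA_cdom[OF a])
  show "bounded_op (a0 a)" unfolding a0_eq_wop by (rule wop_bounded[OF cd])
  have t41: "tt a \<le> 0.41" by (rule tt_small[OF a a1])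
  have t0: "0 \<le> tt a" by (rule tt_props(5)[OF a])
  have mu: "0 < 1 - tt a" using t41 by simp
  have c0: "1 - tt a \<le> norm (cA a 0 s)" for s
    using Phi0_lower[OF a, of s] by (simp add: cA_def alpha_0)
  have "infsum (\<lambda>m. if m = 0 then 0 else alpha_coef a m * (1 + tt a)) UNIV
      = infsum (\<lambda>m. (if m = 0 then 0 else alpha_coef a m) * (1 + tt a)) UNIV"
    by (rule infsum_cong) simp
  also have "\<dots> = tt a * (1 + tt a)" by (simp add: infsum_cmult_left' tt_def)
  also have "\<dots> < 1 - tt a"
  proof -
    have "tt a * (tt a + 2) \<le> 0.41 * (0.41 + 2)"
      by (rule mult_mono) (use t41 t0 in auto)
    then show ?thesis by (simp add: algebra_simps)
  qed
  finally have small: "infsum (\<lambda>m. if m = 0 then 0 else alpha_coef a m * (1 + tt a)) UNIV < 1 - tt a" .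
  show "invertible_op (a0 a)" unfolding a0_eq_wop by (rule wop_invertible[OF cd mu c0 small])
qed

lemma infsum_split_fin:
  fixes f :: "'a \<Rightarrow> 'b::{topological_ab_group_add, t2_space}"
  assumes fs: "f summable_on UNIV" and F: "finite S"
  shows "infsum f UNIV = sum f S + infsum (\<lambda>j. if j \<in> S then 0 else f j) UNIV"
proof -
  have s0: "(\<lambda>j. if j \<in> S then f j else 0) summable_on UNIV"
    by (rule finite_nonzero_values_imp_summable_on) (use F in \<open>auto intro: finite_subset\<close>)
  have s1: "(\<lambda>j. if j \<in> S then 0 else f j) summable_on UNIV"
  proof -
    have "(\<lambda>j. f j + - (if j \<in> S then f j else 0)) summable_on UNIV"
      by (rule summable_on_add[OF fs summable_on_uminus[THEN iffD2, OF s0]])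
    moreover have "(\<lambda>j. f j + - (if j \<in> S then f j else 0)) = (\<lambda>j. if j \<in> S then 0 else f j)"
      by auto
    ultimately show ?thesis by simp
  qed
  have "infsum f UNIV = infsum (\<lambda>j. (if j \<in> S then f j else 0) + (if j \<in> S then 0 else f j)) UNIV"
    by (rule infsum_cong) auto
  also have "\<dots> = infsum (\<lambda>j. if j \<in> S then f j else 0) UNIV + infsum (\<lambda>j. if j \<in> S then 0 else f j) UNIV"
    by (rule infsum_add[OF s0 s1])
  also have "infsum (\<lambda>j. if j \<in> S then f j else 0) UNIV = infsum f S"
    by (rule infsum_cong_neutral) auto
  also have "infsum f S = sum f S" using F by simp
  finally show ?thesis .
qed

lemma tail_small:
  fixes w :: "int \<Rightarrow> real"
  assumes w0: "\<And>m. 0 \<le> w m" and ws: "w summable_on UNIV" and e: "0 < eps"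
  shows "\<exists>N. \<forall>n\<ge>N. infsum (\<lambda>m. if m \<in> {- int n..int n} then 0 else w m) UNIV \<le> eps"
proof -
  obtain F where F: "finite F" "dist (sum w F) (infsum w UNIV) \<le> eps"
    using infsum_finite_approximation[OF ws e] by blast
  obtain N where N: "\<And>m. m \<in> F \<Longrightarrow> \<bar>m\<bar> \<le> int N"
  proof -
    have "finite (nat ` abs ` F)" using F by simp
    then obtain N where NN: "\<forall>x\<in>nat ` abs ` F. x \<le> N" using finite_nat_set_iff_bounded_le by blast
    have "\<bar>m\<bar> \<le> int N" if "m \<in> F" for m
    proof -
      have "nat \<bar>m\<bar> \<le> N" using NN that by blast
      then show ?thesis by simp
    qed
    then show ?thesis using that by blast
  qed
  show ?thesis
  proof (intro exI allI impI)
    fix n assume nN: "N \<le> n"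
    have sub: "F \<subseteq> {- int n..int n}" using N nN by force
    have "infsum w UNIV = sum w {- int n..int n} + infsum (\<lambda>m. if m \<in> {- int n..int n} then 0 else w m) UNIV"
      by (rule infsum_split_fin[OF ws]) simp
    moreover have "sum w F \<le> sum w {- int n..int n}"
      by (rule sum_mono2) (use sub w0 in auto)
    moreover have "infsum w UNIV - sum w F \<le> eps" using F(2) by (simp add: dist_real_def)
    ultimately show "infsum (\<lambda>m. if m \<in> {- int n..int n} then 0 else w m) UNIV \<le> eps" by linarith
  qed
qed

lemma wop_fin:
  fixes \<tau> :: real
  assumes "finite S"
  shows "wop \<tau> (\<lambda>m s. if m \<in> S then c m s else 0) h s = (\<Sum>m\<in>S. c m s * h (s - of_int m * \<tau>))"
proof -
  have "wop \<tau> (\<lambda>m s. if m \<in> S then c m s else 0) h s = infsum (\<lambda>m. c m s * h (s - of_int m * \<tau>)) S"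
    unfolding wop_def by (rule infsum_cong_neutral) auto
  then show ?thesis using assms by simp
qed

lemma wop_diff_AE:
  fixes \<tau> :: real
  assumes cc: "cdom c w" and cd: "cdom d v" and h: "h \<in> L2"
  shows "AE s in lborel. wop \<tau> c h s - wop \<tau> d h s = wop \<tau> (\<lambda>m s. c m s - d m s) h s"
  using wop_AE_fin[OF cc h, of \<tau>] wop_AE_fin[OF cd h, of \<tau>]
proof eventually_elim
  case (elim s)
  have s1: "(\<lambda>m. c m s * h (s - of_int m * \<tau>)) summable_on UNIV" by (rule wop_term_abs(2)[OF cc elim(1)])
  have s2: "(\<lambda>m. d m s * h (s - of_int m * \<tau>)) summable_on UNIV" by (rule wop_term_abs(2)[OF cd elim(2)])
  have "infsum (\<lambda>m. c m s * h (s - of_int m * \<tau>) + - (d m s * h (s - of_int m * \<tau>))) UNIV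
      = infsum (\<lambda>m. c m s * h (s - of_int m * \<tau>)) UNIV + infsum (\<lambda>m. - (d m s * h (s - of_int m * \<tau>))) UNIV"
    by (rule infsum_add[OF s1 summable_on_uminus[THEN iffD2, OF s2]])
  then show ?case unfolding wop_def by (simp add: infsum_uminus algebra_simps)
qed

lemma l2norm_cong_AE:
  assumes "f \<in> borel_measurable borel" "g \<in> borel_measurable borel" "AE s in lborel. f s = g s"
  shows "l2norm f = l2norm g"
proof -
  have [measurable]: "f \<in> borel_measurable borel" "g \<in> borel_measurable borel" using assms by auto
  have "(\<integral>t. (cmod (f t))^2 \<partial>lborel) = (\<integral>t. (cmod (g t))^2 \<partial>lborel)"
    by (rule integral_cong_AE) (use assms(3) in \<open>auto elim: AE_mp\<close>)
  then show ?thesis by (simp add: l2norm_def)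
qed

lemma op_approx_wop:
  fixes \<tau> :: real
  assumes cc: "cdom c w" and cd: "cdom d v" and ce: "cdom (\<lambda>m s. c m s - d m s) e"
    and P: "\<And>h s. h \<in> L2 \<Longrightarrow> P h s = wop \<tau> d h s"
    and small: "infsum e UNIV \<le> eps"
  shows "op_approx (wop \<tau> c) P eps"
  unfolding op_approx_def
proof
  fix h assume h: "h \<in> L2"
  have hm: "h \<in> borel_measurable borel" using h by (simp add: L2_def)
  have m1: "(\<lambda>t. wop \<tau> c h t - P h t) \<in> borel_measurable borel"
  proof -
    have [measurable]: "wop \<tau> c h \<in> borel_measurable borel" "wop \<tau> d h \<in> borel_measurable borel"
      using wop_meas[OF cc hm] wop_meas[OF cd hm] by auto
    show ?thesis by (simp add: P[OF h])
  qed
  have "l2norm (\<lambda>t. wop \<tau> c h t - P h t) = l2norm (wop \<tau> (\<lambda>m s. c m s - d m s) h)"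
    by (rule l2norm_cong_AE[OF m1 wop_meas[OF ce hm]]) (use wop_diff_AE[OF cc cd h, of \<tau>] in \<open>simp add: P[OF h]\<close>)
  also have "\<dots> \<le> infsum e UNIV * l2norm h" by (rule wop_L2(2)[OF ce h])
  also have "\<dots> \<le> eps * l2norm h" by (rule mult_right_mono[OF small l2norm_nonneg])
  finally show "l2norm (\<lambda>t. wop \<tau> c h t - P h t) \<le> eps * l2norm h" .
qed

lemma cdom_restrict:
  assumes "cdom c w"
  shows "cdom (\<lambda>m s. if m \<in> S then c m s else 0) (\<lambda>m. if m \<in> S then w m else 0)"
    "cdom (\<lambda>m s. if m \<in> S then 0 else c m s) (\<lambda>m. if m \<in> S then 0 else w m)"
proof -
  have w0: "\<And>m. 0 \<le> w m" using cdom_nonneg[OF assms] .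
  have ws: "w summable_on UNIV" using assms by (simp add: cdom_def)
  have cm: "\<And>m. c m \<in> borel_measurable borel" using assms by (simp add: cdom_def)
  show "cdom (\<lambda>m s. if m \<in> S then c m s else 0) (\<lambda>m. if m \<in> S then w m else 0)"
    unfolding cdom_def
  proof (intro conjI allI)
    show "(\<lambda>m. if m \<in> S then w m else 0) summable_on UNIV"
      using ws by (rule summable_on_comparison_test) (use w0 in auto)
  qed (use assms cm in \<open>auto simp: cdom_def\<close>)
  show "cdom (\<lambda>m s. if m \<in> S then 0 else c m s) (\<lambda>m. if m \<in> S then 0 else w m)"
    unfolding cdom_def
  proof (intro conjI allI)
    show "(\<lambda>m. if m \<in> S then 0 else w m) summable_on UNIV"
      using ws by (rule summable_on_comparison_test) (use w0 in auto)
  qed (use assms cm in \<open>auto simp: cdom_def\<close>)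
qed

lemma a0_partial_wop:
  "a0_partial a n h s = wop (1 / sqrt a) (\<lambda>m s. if m \<in> {- int n..int n} then cA a m s else 0) h s"
  by (subst wop_fin) (simp_all add: a0_partial_def a0_term_def pi_adj_def cA_def)

theorem a0_converges:
  assumes a: "0 < a"
  shows "a0_series_converges a"
  unfolding a0_series_converges_def
proof (intro allI impI)
  fix eps :: real assume e: "0 < eps"
  define w where "w = (\<lambda>m. alpha_coef a m * (1 + tt a))"
  have cd: "cdom (cA a) w" unfolding w_def by (rule cA_cdom[OF a])
  have w0: "\<And>m. 0 \<le> w m" using cdom_nonneg[OF cd] .
  have ws: "w summable_on UNIV" using cd by (simp add: cdom_def)
  obtain N where N: "\<And>n. N \<le> n \<Longrightarrow> infsum (\<lambda>m. if m \<in> {- int n..int n} then 0 else w m) UNIV \<le> eps"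
    using tail_small[OF w0 ws e] by blast
  show "\<exists>N. \<forall>n\<ge>N. op_approx (a0 a) (a0_partial a n) eps"
  proof (intro exI allI impI)
    fix n assume nN: "N \<le> n"
    let ?S = "{- int n..int n}"
    have ce: "cdom (\<lambda>m s. cA a m s - (if m \<in> ?S then cA a m s else 0)) (\<lambda>m. if m \<in> ?S then 0 else w m)"
    proof -
      have "(\<lambda>m s. cA a m s - (if m \<in> ?S then cA a m s else 0)) = (\<lambda>m s. if m \<in> ?S then 0 else cA a m s)"
        by (intro ext) auto
      then show ?thesis using cdom_restrict(2)[OF cd, of ?S] by simp
    qed
    show "op_approx (a0 a) (a0_partial a n) eps"
      unfolding a0_eq_wop
      by (rule op_approx_wop[OF cd cdom_restrict(1)[OF cd] ce a0_partial_wop N[OF nN]])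
  qed
qed

definition mod_op :: "real \<Rightarrow> int \<Rightarrow> op" where
  "mod_op a j h t = exp (- 2 * pi * \<i> * complex_of_real (t * (of_int j / sqrt a))) * h t"

definition sh_op :: "real \<Rightarrow> int \<Rightarrow> op" where
  "sh_op a m h t = h (t - of_int m / sqrt a)"

abbreviation GG :: "real \<Rightarrow> op set" where
  "GG a \<equiv> {V1 a, V2 a, pi_op 0 (1 / sqrt a), pi_op (1 / sqrt a) 0}"

lemma gen_V1: "V1 a \<in> gen_alg (GG a)" by (rule gen_alg.gen) simp
lemma gen_V2: "V2 a \<in> gen_alg (GG a)" by (rule gen_alg.gen) simp
lemma gen_W1: "pi_op 0 (1 / sqrt a) \<in> gen_alg (GG a)" by (rule gen_alg.gen) simp
lemma gen_W2: "pi_op (1 / sqrt a) 0 \<in> gen_alg (GG a)" by (rule gen_alg.gen) simp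

lemma gen_comp: "S \<in> gen_alg G \<Longrightarrow> T \<in> gen_alg G \<Longrightarrow> (\<lambda>h. S (T h)) \<in> gen_alg G"
  by (rule gen_alg.comp)

lemma exp_ij_add:
  "exp (- 2 * pi * \<i> * complex_of_real (t * (x / sqrt a))) * exp (- 2 * pi * \<i> * complex_of_real (t * (y / sqrt a)))
   = exp (- 2 * pi * \<i> * complex_of_real (t * ((x + y) / sqrt a)))"
proof -
  have "- 2 * pi * \<i> * complex_of_real (t * (x / sqrt a)) + - 2 * pi * \<i> * complex_of_real (t * (y / sqrt a))
      = - 2 * pi * \<i> * complex_of_real (t * ((x + y) / sqrt a))"
    by (simp add: algebra_simps add_divide_distrib)
  then show ?thesis by (simp add: exp_add[symmetric])
qed

lemma mod_base: "(\<lambda>h. V1 a (pi_op 0 (1 / sqrt a) h)) = mod_op a 0"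
proof (intro ext)
  fix h t
  have e: "exp (- 2 * pi * \<i> * complex_of_real ((t - 0) * (1 / sqrt a))) * exp (2 * pi * \<i> * complex_of_real (t * (1 / sqrt a))) = 1"
    by (simp add: exp_minus[symmetric] exp_add[symmetric])
  have "V1 a (pi_op 0 (1 / sqrt a) h) t = exp (- 2 * pi * \<i> * complex_of_real ((t - 0) * (1 / sqrt a))) * (exp (2 * pi * \<i> * complex_of_real ((t - 0) * (1 / sqrt a))) * h (t - 0 + 0))"
    by (simp only: V1_def pi_adj_def pi_op_def)
  also have "\<dots> = h t" using e by (simp add: mult.assoc[symmetric])
  finally show "V1 a (pi_op 0 (1 / sqrt a) h) t = mod_op a 0 h t" by (simp add: mod_op_def)
qed

lemma mod_step1: "(\<lambda>h. V1 a (mod_op a i h)) = mod_op a (i + 1)"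
proof (intro ext)
  fix h t
  have "V1 a (mod_op a i h) t = exp (- 2 * pi * \<i> * complex_of_real ((t - 0) * (1 / sqrt a))) *
      (exp (- 2 * pi * \<i> * complex_of_real ((t - 0) * (of_int i / sqrt a))) * h (t - 0))"
    by (simp only: V1_def pi_adj_def mod_op_def)
  also have "\<dots> = exp (- 2 * pi * \<i> * complex_of_real (t * ((1 + of_int i) / sqrt a))) * h t"
    using exp_ij_add[of t 1 a "of_int i"] by (simp add: mult.assoc[symmetric])
  also have "\<dots> = mod_op a (i + 1) h t" by (simp add: mod_op_def add.commute)
  finally show "V1 a (mod_op a i h) t = mod_op a (i + 1) h t" .
qed

lemma mod_step2: "(\<lambda>h. pi_op 0 (1 / sqrt a) (mod_op a i h)) = mod_op a (i - 1)"
proof (intro ext)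
  fix h t
  have e1: "2 * pi * \<i> * complex_of_real (t * (1 / sqrt a)) = - 2 * pi * \<i> * complex_of_real (t * (-1 / sqrt a))"
    by simp
  have "pi_op 0 (1 / sqrt a) (mod_op a i h) t = exp (2 * pi * \<i> * complex_of_real (t * (1 / sqrt a))) *
      (exp (- 2 * pi * \<i> * complex_of_real ((t + 0) * (of_int i / sqrt a))) * h (t + 0))"
    by (simp only: pi_op_def mod_op_def)
  also have "\<dots> = exp (- 2 * pi * \<i> * complex_of_real (t * ((-1 + of_int i) / sqrt a))) * h t"
    using exp_ij_add[of t "-1" a "of_int i"] by (simp only: e1 add_0_right mult.assoc[symmetric])
  also have "\<dots> = mod_op a (i - 1) h t" by (simp add: mod_op_def)
  finally show "pi_op 0 (1 / sqrt a) (mod_op a i h) t = mod_op a (i - 1) h t" .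
qed

lemma sh_base: "(\<lambda>h. V2 a (pi_op (1 / sqrt a) 0 h)) = sh_op a 0"
  by (intro ext) (simp add: V2_def pi_adj_def pi_op_def sh_op_def)

lemma sh_step1: "(\<lambda>h. V2 a (sh_op a i h)) = sh_op a (i + 1)"
proof (intro ext)
  fix h t
  have arg: "t - 1 / sqrt a - of_int i / sqrt a = t - of_int (i + 1) / sqrt a"
    by (simp add: add_divide_distrib)
  show "V2 a (sh_op a i h) t = sh_op a (i + 1) h t"
    by (simp add: V2_def pi_adj_def sh_op_def arg)
qed

lemma sh_step2: "(\<lambda>h. pi_op (1 / sqrt a) 0 (sh_op a i h)) = sh_op a (i - 1)"
proof (intro ext)
  fix h t
  have arg: "t + 1 / sqrt a - of_int i / sqrt a = t - of_int (i - 1) / sqrt a"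
    by (simp add: diff_divide_distrib)
  show "pi_op (1 / sqrt a) 0 (sh_op a i h) t = sh_op a (i - 1) h t"
    by (simp add: pi_op_def sh_op_def arg)
qed

lemma mod_op_gen: "mod_op a j \<in> gen_alg (GG a)"
proof (induction j rule: int_induct[where k=0])
  case base
  show ?case using gen_comp[OF gen_V1[of a] gen_W1[of a]] by (simp only: mod_base)
next
  case (step1 i)
  show ?case using gen_comp[OF gen_V1[of a] step1.IH] by (simp only: mod_step1)
next
  case (step2 i)
  show ?case using gen_comp[OF gen_W1[of a] step2.IH] by (simp only: mod_step2)
qed

lemma sh_op_gen: "sh_op a m \<in> gen_alg (GG a)"
proof (induction m rule: int_induct[where k=0])
  case base
  show ?case using gen_comp[OF gen_V2[of a] gen_W2[of a]] by (simp only: sh_base)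
next
  case (step1 i)
  show ?case using gen_comp[OF gen_V2[of a] step1.IH] by (simp only: sh_step1)
next
  case (step2 i)
  show ?case using gen_comp[OF gen_W2[of a] step2.IH] by (simp only: sh_step2)
qed

lemma gen_sum:
  assumes "finite F" "\<And>x. x \<in> F \<Longrightarrow> T x \<in> gen_alg G" "g0 \<in> gen_alg G"
  shows "(\<lambda>h t. \<Sum>x\<in>F. T x h t) \<in> gen_alg G"
  using assms(1,2)
proof (induction F rule: finite_induct)
  case empty
  have "(\<lambda>h t. 0 * g0 h t) \<in> gen_alg G" by (rule gen_alg.smult[OF assms(3)])
  then show ?case by simp
next
  case (insert x F)
  have "(\<lambda>h t. T x h t + (\<Sum>y\<in>F. T y h t)) \<in> gen_alg G"
    by (rule gen_alg.add) (use insert in auto)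
  then show ?case using insert by simp
qed

definition thterm :: "real \<Rightarrow> int \<Rightarrow> real \<Rightarrow> complex" where
  "thterm a j x = complex_of_real (alpha_coef a j) * exp (2 * pi * \<i> * of_int j * complex_of_real x)"

definition zz :: "real \<Rightarrow> int \<Rightarrow> real \<Rightarrow> real" where
  "zz a m s = - s / sqrt a + of_int m / (2 * a)"

definition cfin :: "real \<Rightarrow> nat \<Rightarrow> int \<Rightarrow> real \<Rightarrow> complex" where
  "cfin a n m s = complex_of_real (alpha_coef a m) * (\<Sum>j\<in>{- int n..int n}. thterm a j (zz a m s))"

definition Tm :: "real \<Rightarrow> int \<Rightarrow> int \<Rightarrow> op" where
  "Tm a m j h t = (complex_of_real (alpha_coef a m * alpha_coef a j) *
      exp (2 * pi * \<i> * of_int j * complex_of_real (of_int m / (2 * a)))) * mod_op a j (sh_op a m h) t"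

definition Pn :: "real \<Rightarrow> nat \<Rightarrow> op" where
  "Pn a n h t = (\<Sum>p\<in>{- int n..int n} \<times> {- int n..int n}. Tm a (fst p) (snd p) h t)"

lemma Tm_gen: "Tm a m j \<in> gen_alg (GG a)"
proof -
  have "(\<lambda>h. mod_op a j (sh_op a m h)) \<in> gen_alg (GG a)"
    by (rule gen_comp[OF mod_op_gen sh_op_gen])
  then have "(\<lambda>h t. (complex_of_real (alpha_coef a m * alpha_coef a j) *
      exp (2 * pi * \<i> * of_int j * complex_of_real (of_int m / (2 * a)))) * mod_op a j (sh_op a m h) t) \<in> gen_alg (GG a)"
    by (rule gen_alg.smult)
  then show ?thesis unfolding Tm_def[abs_def] .
qed

lemma Pn_gen: "Pn a n \<in> gen_alg (GG a)"
  unfolding Pn_def[abs_def]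
  by (rule gen_sum[OF _ _ gen_V1]) (auto intro: Tm_gen)

lemma Tm_eq: "Tm a m j h s = complex_of_real (alpha_coef a m) * thterm a j (zz a m s) * h (s - of_int m * (1 / sqrt a))"
proof -
  have "exp (2 * pi * \<i> * of_int j * complex_of_real (of_int m / (2 * a))) * exp (- 2 * pi * \<i> * complex_of_real (s * (of_int j / sqrt a)))
      = exp (2 * pi * \<i> * of_int j * complex_of_real (zz a m s))"
  proof -
    have "2 * pi * \<i> * of_int j * complex_of_real (of_int m / (2 * a)) + - 2 * pi * \<i> * complex_of_real (s * (of_int j / sqrt a))
        = 2 * pi * \<i> * of_int j * complex_of_real (zz a m s)"
      by (simp add: zz_def algebra_simps)
    then show ?thesis by (simp add: exp_add[symmetric])
  qed
  then show ?thesis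
    by (simp add: Tm_def mod_op_def sh_op_def thterm_def algebra_simps)
qed

lemma Pn_wop: "Pn a n h s = wop (1 / sqrt a) (\<lambda>m s. if m \<in> {- int n..int n} then cfin a n m s else 0) h s"
proof -
  let ?S = "{- int n..int n}"
  have "Pn a n h s = (\<Sum>m\<in>?S. \<Sum>j\<in>?S. Tm a m j h s)"
    unfolding Pn_def by (simp add: sum.cartesian_product case_prod_beta')
  also have "\<dots> = (\<Sum>m\<in>?S. cfin a n m s * h (s - of_int m * (1 / sqrt a)))"
    by (rule sum.cong) (simp_all add: Tm_eq cfin_def sum_distrib_left sum_distrib_right)
  also have "\<dots> = wop (1 / sqrt a) (\<lambda>m s. if m \<in> ?S then cfin a n m s else 0) h s"
    by (rule wop_fin[symmetric]) simp
  finally show ?thesis .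
qed

lemma thterm_norm: "0 < a \<Longrightarrow> norm (thterm a j x) = alpha_coef a j"
  unfolding thterm_def by (rule Phi_term_norm)

lemma Phi_thterm: "0 < a \<Longrightarrow> Phi a m s = infsum (\<lambda>j. thterm a j (zz a m s)) UNIV"
  unfolding thterm_def zz_def by (rule Phi_series)

lemma thterm_abs: "0 < a \<Longrightarrow> (\<lambda>j. norm (thterm a j x)) summable_on UNIV"
  using tt_props(2) by (simp add: thterm_norm)

lemma sum_alpha_le: "0 < a \<Longrightarrow> finite S \<Longrightarrow> sum (alpha_coef a) S \<le> 1 + tt a"
  using tt_props(2,4)[of a] alpha_pos[of a]
  by (metis finite_sum_le_infsum less_imp_le subset_UNIV)

lemma cfin_cdom:
  assumes a: "0 < a"
  shows "cdom (cfin a n) (\<lambda>m. alpha_coef a m * (1 + tt a))"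
  unfolding cdom_def
proof (intro conjI allI)
  show "cfin a n m \<in> borel_measurable borel" for m
    unfolding cfin_def[abs_def] thterm_def zz_def
    by (rule borel_measurable_continuous_onI) (use a in \<open>auto intro!: continuous_intros\<close>)
  show "norm (cfin a n m s) \<le> alpha_coef a m * (1 + tt a)" for m s
  proof -
    have "norm (\<Sum>j\<in>{- int n..int n}. thterm a j (zz a m s)) \<le> (\<Sum>j\<in>{- int n..int n}. norm (thterm a j (zz a m s)))"
      by (rule norm_sum)
    also have "\<dots> = sum (alpha_coef a) {- int n..int n}" by (simp add: thterm_norm[OF a])
    also have "\<dots> \<le> 1 + tt a" by (rule sum_alpha_le[OF a]) simp
    finally show ?thesis
      unfolding cfin_def norm_mult using alpha_pos[of a m] by (simp add: mult_left_mono)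
  qed
  show "(\<lambda>m. alpha_coef a m * (1 + tt a)) summable_on UNIV"
    by (rule summable_on_cmult_left[OF tt_props(2)[OF a]])
qed

lemma diff_cdom:
  fixes n :: nat
  assumes a: "0 < a"
    and S_def: "S = {- int n..int n}"
    and Tn_def: "Tn = infsum (\<lambda>j. if j \<in> S then 0 else alpha_coef a j) UNIV"
  shows "cdom (\<lambda>m s. cA a m s - (if m \<in> S then cfin a n m s else 0))
           (\<lambda>m. alpha_coef a m * Tn + (if m \<in> S then 0 else alpha_coef a m) * (1 + tt a))"
    "infsum (\<lambda>m. alpha_coef a m * Tn + (if m \<in> S then 0 else alpha_coef a m) * (1 + tt a)) UNIV
       = 2 * (1 + tt a) * Tn"
proof -
  have fS: "finite S" by (simp add: S_def)
  have as: "alpha_coef a summable_on UNIV" by (rule tt_props(2)[OF a])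
  have a0: "\<And>j. 0 \<le> alpha_coef a j" using alpha_pos[of a] by (simp add: less_imp_le)
  have rs: "(\<lambda>j. if j \<in> S then 0 else alpha_coef a j) summable_on UNIV"
    using as by (rule summable_on_comparison_test) (use a0 in auto)
  have Tn0: "0 \<le> Tn" unfolding Tn_def by (rule infsum_nonneg) (use a0 in auto)
  have t0: "0 \<le> tt a" by (rule tt_props(5)[OF a])
  show "cdom (\<lambda>m s. cA a m s - (if m \<in> S then cfin a n m s else 0))
           (\<lambda>m. alpha_coef a m * Tn + (if m \<in> S then 0 else alpha_coef a m) * (1 + tt a))"
    unfolding cdom_def
  proof (intro conjI allI)
    show "(\<lambda>s. cA a m s - (if m \<in> S then cfin a n m s else 0)) \<in> borel_measurable borel" for m
    proof -
      have [measurable]: "cA a m \<in> borel_measurable borel" "cfin a n m \<in> borel_measurable borel"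
        using cA_cdom[OF a] cfin_cdom[OF a, of n] by (auto simp: cdom_def)
      show ?thesis by measurable
    qed
    show "norm (cA a m s - (if m \<in> S then cfin a n m s else 0)) \<le> alpha_coef a m * Tn + (if m \<in> S then 0 else alpha_coef a m) * (1 + tt a)" for m s
    proof (cases "m \<in> S")
      case True
      let ?f = "\<lambda>j. thterm a j (zz a m s)"
      have fa: "(\<lambda>j. norm (?f j)) summable_on UNIV" by (rule thterm_abs[OF a])
      have fs: "?f summable_on UNIV" by (rule abs_summable_summable[OF fa])
      have "Phi a m s = sum ?f S + infsum (\<lambda>j. if j \<in> S then 0 else ?f j) UNIV"
        unfolding Phi_thterm[OF a] by (rule infsum_split_fin[OF fs fS])
      then have eq: "cA a m s - cfin a n m s = complex_of_real (alpha_coef a m) * infsum (\<lambda>j. if j \<in> S then 0 else ?f j) UNIV"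
        by (simp add: cA_def cfin_def S_def algebra_simps)
      have nr: "(\<lambda>j. norm (if j \<in> S then 0 else ?f j)) = (\<lambda>j. if j \<in> S then 0 else alpha_coef a j)"
        by (intro ext) (simp add: thterm_norm[OF a])
      have "norm (infsum (\<lambda>j. if j \<in> S then 0 else ?f j) UNIV) \<le> infsum (\<lambda>j. norm (if j \<in> S then 0 else ?f j)) UNIV"
        by (rule norm_infsum_bound) (simp only: nr rs)
      also have "\<dots> = Tn" by (simp only: nr Tn_def)
      finally have "norm (infsum (\<lambda>j. if j \<in> S then 0 else ?f j) UNIV) \<le> Tn" .
      then have "norm (cA a m s - cfin a n m s) \<le> alpha_coef a m * Tn"
        unfolding eq norm_mult using a0[of m] by (simp add: mult_left_mono)
      then show ?thesis using True by simp
    next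
      case False
      have "norm (cA a m s) \<le> alpha_coef a m * (1 + tt a)"
        using cA_cdom[OF a] by (simp add: cdom_def)
      moreover have "0 \<le> alpha_coef a m * Tn" using a0[of m] Tn0 by simp
      ultimately show ?thesis using False by simp
    qed
    show "(\<lambda>m. alpha_coef a m * Tn + (if m \<in> S then 0 else alpha_coef a m) * (1 + tt a)) summable_on UNIV"
      by (rule summable_on_add[OF summable_on_cmult_left[OF as] summable_on_cmult_left[OF rs]])
  qed
  have "infsum (\<lambda>m. alpha_coef a m * Tn + (if m \<in> S then 0 else alpha_coef a m) * (1 + tt a)) UNIV
     = infsum (\<lambda>m. alpha_coef a m * Tn) UNIV + infsum (\<lambda>m. (if m \<in> S then 0 else alpha_coef a m) * (1 + tt a)) UNIV"
    by (rule infsum_add[OF summable_on_cmult_left[OF as] summable_on_cmult_left[OF rs]])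
  also have "\<dots> = (1 + tt a) * Tn + Tn * (1 + tt a)"
    by (simp add: infsum_cmult_left[OF as] infsum_cmult_left[OF rs] tt_props(4)[OF a] Tn_def)
  finally show "infsum (\<lambda>m. alpha_coef a m * Tn + (if m \<in> S then 0 else alpha_coef a m) * (1 + tt a)) UNIV
       = 2 * (1 + tt a) * Tn" by simp
qed

theorem a0_rot_alg:
  assumes a: "0 < a" and a1: "a \<le> 0.948"
  shows "a0 a \<in> rot_alg a"
  unfolding rot_alg_def cstar_gen_def
proof (intro CollectI conjI allI impI)
  show "bounded_op (a0 a)" by (rule a0_invertible(1)[OF a a1])
  fix eps :: real assume e: "0 < eps"
  have a0': "\<And>j. 0 \<le> alpha_coef a j" using alpha_pos[of a] by (simp add: less_imp_le)
  have t0: "0 \<le> tt a" by (rule tt_props(5)[OF a])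
  have e': "0 < eps / (2 * (1 + tt a))" using e t0 by simp
  obtain N where N: "\<And>n. N \<le> n \<Longrightarrow> infsum (\<lambda>m. if m \<in> {- int n..int n} then 0 else alpha_coef a m) UNIV \<le> eps / (2 * (1 + tt a))"
    using tail_small[OF a0' tt_props(2)[OF a] e'] by blast
  define S where "S = {- int N..int N}"
  define Tn where "Tn = infsum (\<lambda>j. if j \<in> S then 0 else alpha_coef a j) UNIV"
  have Tb: "Tn \<le> eps / (2 * (1 + tt a))" using N[of N] by (simp add: Tn_def S_def)
  note dc = diff_cdom[OF a S_def Tn_def]
  have small: "infsum (\<lambda>m. alpha_coef a m * Tn + (if m \<in> S then 0 else alpha_coef a m) * (1 + tt a)) UNIV \<le> eps"
  proof -
    have "2 * (1 + tt a) * Tn \<le> 2 * (1 + tt a) * (eps / (2 * (1 + tt a)))"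
      by (rule mult_left_mono[OF Tb]) (use t0 in simp)
    also have "\<dots> = eps" using t0 by simp
    finally show ?thesis using dc(2) by simp
  qed
  have "op_approx (wop (1 / sqrt a) (cA a)) (Pn a N) eps"
  proof (rule op_approx_wop[OF cA_cdom[OF a] cdom_restrict(1)[OF cfin_cdom[OF a, of N]] dc(1) _ small])
    show "\<And>h s. h \<in> L2 \<Longrightarrow> Pn a N h s = wop (1 / sqrt a) (\<lambda>m s. if m \<in> S then cfin a N m s else 0) h s"
      unfolding S_def by (rule Pn_wop)
  qed
  then show "\<exists>P\<in>gen_alg (GG a). op_approx (a0 a) P eps"
    using Pn_gen[of a N] unfolding a0_eq_wop by blast
qed

lemma gauss_ft:
  "(\<integral>u. complex_of_real (exp (- (u * u) / 2)) * exp (\<i> * complex_of_real (\<theta> * u)) \<partial>lborel)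
     = complex_of_real (sqrt (2 * pi) * exp (- (\<theta> * \<theta>) / 2))"
proof -
  have "char std_normal_distribution \<theta> = complex_of_real (exp (- (\<theta> * \<theta>) / 2))"
    by (simp add: char_std_normal_distribution power2_eq_square)
  moreover have "char std_normal_distribution \<theta> = (\<integral>u. std_normal_density u *\<^sub>R exp (\<i> * complex_of_real (\<theta> * u)) \<partial>lborel)"
    unfolding char_def by (subst integral_density) auto
  moreover have "(\<integral>u. std_normal_density u *\<^sub>R exp (\<i> * complex_of_real (\<theta> * u)) \<partial>lborel)
     = complex_of_real (1 / sqrt (2 * pi)) * (\<integral>u. complex_of_real (exp (- (u * u) / 2)) * exp (\<i> * complex_of_real (\<theta> * u)) \<partial>lborel)"
    by (simp add: std_normal_density_def scaleR_conv_of_real mult.assoc power2_eq_square)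
  ultimately have "complex_of_real (1 / sqrt (2 * pi)) * (\<integral>u. complex_of_real (exp (- (u * u) / 2)) * exp (\<i> * complex_of_real (\<theta> * u)) \<partial>lborel)
      = complex_of_real (exp (- (\<theta> * \<theta>) / 2))" by simp
  then have "complex_of_real (sqrt (2 * pi)) * (complex_of_real (1 / sqrt (2 * pi)) * (\<integral>u. complex_of_real (exp (- (u * u) / 2)) * exp (\<i> * complex_of_real (\<theta> * u)) \<partial>lborel))
      = complex_of_real (sqrt (2 * pi)) * complex_of_real (exp (- (\<theta> * \<theta>) / 2))" by simp
  then show ?thesis by (simp add: mult.assoc[symmetric] of_real_mult[symmetric] del: of_real_mult)
qed

lemma l2inner_gauss:
  "l2inner (pi_op x y gauss) gauss
     = complex_of_real (exp (- pi * (x * x + y * y) / 2) / sqrt 2) * exp (- (pi * \<i> * complex_of_real (x * y)))"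
proof -
  define c where "c = 1 / (2 * sqrt pi)"
  define d where "d = - x / 2"
  define \<theta> where "\<theta> = y * sqrt pi"
  define K where "K = complex_of_real (exp (- pi * x * x / 2)) * exp (- (pi * \<i> * complex_of_real (x * y)))"
  define f where "f = (\<lambda>t. exp (2 * pi * \<i> * complex_of_real (t * y)) * gauss (t + x) * cnj (gauss t))"
  have sp: "sqrt pi * sqrt pi = pi" by simp
  have sp0: "0 < sqrt pi" by simp
  have c0: "0 < c" unfolding c_def by simp
  have "l2inner (pi_op x y gauss) gauss = (\<integral>t. f t \<partial>lborel)"
    unfolding l2inner_def pi_op_def f_def by simp
  also have "\<dots> = \<bar>c\<bar> *\<^sub>R (\<integral>u. f (d + c * u) \<partial>lborel)"
    by (rule lborel_integral_real_affine) (use c0 in simp)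
  also have "(\<integral>u. f (d + c * u) \<partial>lborel)
      = (\<integral>u. K * (complex_of_real (exp (- (u * u) / 2)) * exp (\<i> * complex_of_real (\<theta> * u))) \<partial>lborel)"
  proof (rule Bochner_Integration.integral_cong[OF refl])
    fix u
    define t where "t = d + c * u"
    have cc: "c * c = 1 / (4 * pi)"
      unfolding c_def using sp by (simp add: field_simps)
    have R0: "(t + x) * (t + x) + t * t = 2 * (c * c) * (u * u) + x * x / 2"
      unfolding t_def d_def by (simp add: field_simps)
    have R: "pi * ((t + x) * (t + x) + t * t) = u * u / 2 + pi * x * x / 2"
      unfolding R0 cc by (simp add: field_simps)
    have P: "2 * pi * (t * y) = - (pi * (x * y)) + \<theta> * u"
      unfolding t_def d_def c_def \<theta>_def using sp sp0 by (simp add: field_simps)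
    have g: "gauss (t + x) * cnj (gauss t) = complex_of_real (exp (- (u * u) / 2)) * complex_of_real (exp (- pi * x * x / 2))"
    proof -
      have re: "exp (- pi * (t + x)^2) * exp (- pi * t^2) = exp (- (pi * ((t + x) * (t + x) + t * t)))"
        by (simp add: exp_add[symmetric] power2_eq_square algebra_simps)
      have "gauss (t + x) * cnj (gauss t) = complex_of_real (exp (- pi * (t + x)^2) * exp (- pi * t^2))"
        by (simp add: gauss_def)
      also have "\<dots> = complex_of_real (exp (- (pi * ((t + x) * (t + x) + t * t))))"
        by (simp only: re)
      also have "\<dots> = complex_of_real (exp (- (u * u) / 2) * exp (- pi * x * x / 2))"
        by (simp only: R) (simp add: exp_add[symmetric] field_simps)
      finally show ?thesis by simp
    qed
    have e: "exp (2 * pi * \<i> * complex_of_real (t * y)) = exp (- (pi * \<i> * complex_of_real (x * y))) * exp (\<i> * complex_of_real (\<theta> * u))"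
    proof -
      have "2 * pi * \<i> * complex_of_real (t * y) = \<i> * complex_of_real (2 * pi * (t * y))" by simp
      also have "\<dots> = - (pi * \<i> * complex_of_real (x * y)) + \<i> * complex_of_real (\<theta> * u)"
        by (simp only: P) (simp add: algebra_simps)
      finally have eq: "2 * pi * \<i> * complex_of_real (t * y) = - (pi * \<i> * complex_of_real (x * y)) + \<i> * complex_of_real (\<theta> * u)" .
      show ?thesis by (simp only: eq exp_add)
    qed
    show "f (d + c * u) = K * (complex_of_real (exp (- (u * u) / 2)) * exp (\<i> * complex_of_real (\<theta> * u)))"
      unfolding f_def t_def[symmetric] K_def using e g by (simp add: algebra_simps)
  qed
  also have "\<dots> = K * complex_of_real (sqrt (2 * pi) * exp (- (\<theta> * \<theta>) / 2))"
    by (simp only: integral_mult_right_zero gauss_ft)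
  finally have L: "l2inner (pi_op x y gauss) gauss = \<bar>c\<bar> *\<^sub>R (K * complex_of_real (sqrt (2 * pi) * exp (- (\<theta> * \<theta>) / 2)))" .
  have r1: "\<bar>c\<bar> * sqrt (2 * pi) = 1 / sqrt 2"
  proof -
    have "\<bar>c\<bar> * sqrt (2 * pi) = sqrt 2 * sqrt pi / (2 * sqrt pi)"
      using c0 by (simp add: c_def real_sqrt_mult)
    also have "\<dots> = sqrt 2 / 2" using sp0 by simp
    also have "\<dots> = 1 / sqrt 2" by (simp add: field_simps)
    finally show ?thesis .
  qed
  have r2: "exp (- pi * x * x / 2) * exp (- (\<theta> * \<theta>) / 2) = exp (- pi * (x * x + y * y) / 2)"
    unfolding \<theta>_def using sp by (simp add: exp_add[symmetric] field_simps)
  have "\<bar>c\<bar> *\<^sub>R (K * complex_of_real (sqrt (2 * pi) * exp (- (\<theta> * \<theta>) / 2)))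
     = complex_of_real ((\<bar>c\<bar> * sqrt (2 * pi)) * (exp (- pi * x * x / 2) * exp (- (\<theta> * \<theta>) / 2))) * exp (- (pi * \<i> * complex_of_real (x * y)))"
    unfolding K_def scaleR_conv_of_real by (simp add: algebra_simps)
  also have "\<dots> = complex_of_real (exp (- pi * (x * x + y * y) / 2) / sqrt 2) * exp (- (pi * \<i> * complex_of_real (x * y)))"
    by (simp only: r1 r2) simp
  finally show ?thesis using L by simp
qed

lemma gram_term:
  assumes a: "0 < a"
  shows "l2inner (pi_op (of_int k / sqrt a) (of_int j / sqrt a) gauss) gauss * pi_adj (of_int k / sqrt a) (of_int j / sqrt a) h s
    = complex_of_real (1 / sqrt 2) * (complex_of_real (alpha_coef a k) * thterm a j (zz a k s) * h (s - of_int k * (1 / sqrt a)))"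
proof -
  define x where "x = of_int k / sqrt a"
  define y where "y = of_int j / sqrt a"
  have sa: "sqrt a * sqrt a = a" using a by simp
  have sa0: "0 < sqrt a" using a by simp
  have e1: "exp (- pi * (x * x + y * y) / 2) = alpha_coef a k * alpha_coef a j"
  proof -
    have "- pi * (x * x + y * y) / 2 = - pi * of_int (k^2) / (2 * a) + - pi * of_int (j^2) / (2 * a)"
      unfolding x_def y_def using sa sa0 a by (simp add: field_simps power2_eq_square)
    then show ?thesis unfolding alpha_coef_def by (simp only: exp_add[symmetric])
  qed
  have ph: "- (pi * (x * y)) + - (2 * pi * ((s - x) * y)) = 2 * pi * (of_int j * zz a k s)"
    unfolding x_def y_def zz_def using sa sa0 a by (simp add: field_simps)
  have e2: "exp (- (pi * \<i> * complex_of_real (x * y))) * exp (- 2 * pi * \<i> * complex_of_real ((s - x) * y))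
      = exp (2 * pi * \<i> * of_int j * complex_of_real (zz a k s))"
  proof -
    have "- (pi * \<i> * complex_of_real (x * y)) + - 2 * pi * \<i> * complex_of_real ((s - x) * y)
        = \<i> * complex_of_real (- (pi * (x * y)) + - (2 * pi * ((s - x) * y)))"
      by (simp add: algebra_simps)
    also have "\<dots> = 2 * pi * \<i> * of_int j * complex_of_real (zz a k s)"
      by (simp only: ph) (simp add: algebra_simps)
    finally show ?thesis by (simp add: exp_add[symmetric])
  qed
  have "l2inner (pi_op x y gauss) gauss * pi_adj x y h s
      = complex_of_real (exp (- pi * (x * x + y * y) / 2) / sqrt 2) *
        (exp (- (pi * \<i> * complex_of_real (x * y))) * exp (- 2 * pi * \<i> * complex_of_real ((s - x) * y))) * h (s - x)"
    by (simp add: l2inner_gauss pi_adj_def algebra_simps)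
  also have "\<dots> = complex_of_real (1 / sqrt 2) * (complex_of_real (alpha_coef a k) * thterm a j (zz a k s) * h (s - x))"
    by (simp only: e1 e2) (simp add: thterm_def algebra_simps)
  finally show ?thesis by (simp add: x_def y_def)
qed

theorem a0_gram:
  assumes a: "0 < a" and h: "h \<in> L2"
  shows "AE t in lborel. a0 a h t = complex_of_real (sqrt 2) * gram a gauss h t"
proof -
  have a0': "\<And>j. 0 \<le> alpha_coef a j" using alpha_pos[of a] by (simp add: less_imp_le)
  have as: "alpha_coef a summable_on UNIV" by (rule tt_props(2)[OF a])
  show ?thesis
    using wop_AE_fin[OF cdom_zero[OF a0' as] h, of "1 / sqrt a"]
  proof eventually_elim
    case (elim s)
    define F where "F = (\<lambda>j k. l2inner (pi_op (of_int k / sqrt a) (of_int j / sqrt a) gauss) gauss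
       * pi_adj (of_int k / sqrt a) (of_int j / sqrt a) h s)"
    define c2 where "c2 = complex_of_real (1 / sqrt 2)"
    define G where "G = (\<lambda>(j, k). (1 / sqrt 2) * alpha_coef a j * (alpha_coef a k * cmod (h (s - of_int k * (1 / sqrt a)))))"
    have Fe: "F j k = c2 * (complex_of_real (alpha_coef a k) * thterm a j (zz a k s) * h (s - of_int k * (1 / sqrt a)))" for j k
      unfolding F_def c2_def by (rule gram_term[OF a])
    have FG: "norm (F j k) = G (j, k)" for j k
    proof -
      have "norm (F j k) = norm c2 * (norm (complex_of_real (alpha_coef a k)) * norm (thterm a j (zz a k s)) * norm (h (s - of_int k * (1 / sqrt a))))"
        unfolding Fe by (simp only: norm_mult)
      also have "\<dots> = (1 / sqrt 2) * (alpha_coef a k * alpha_coef a j * cmod (h (s - of_int k * (1 / sqrt a))))"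
        using a0'[of k] by (simp only: thterm_norm[OF a] c2_def norm_of_real) simp
      finally show ?thesis by (simp add: G_def algebra_simps)
    qed
    have G0: "\<And>p. 0 \<le> G p" using a0' by (auto simp: G_def)
    define C where "C = infsum (\<lambda>k. alpha_coef a k * cmod (h (s - of_int k * (1 / sqrt a)))) UNIV"
    have "(\<integral>\<^sup>+p. ennreal (G p) \<partial>count_space UNIV)
        = (\<integral>\<^sup>+j. \<integral>\<^sup>+k. ennreal (G (j, k)) \<partial>count_space UNIV \<partial>count_space UNIV)"
      by (rule nn_count_pair)
    also have "\<dots> = (\<integral>\<^sup>+j. ennreal ((1 / sqrt 2) * alpha_coef a j) * ennreal C \<partial>count_space UNIV)"
    proof (rule nn_integral_cong)
      fix j
      have "(\<integral>\<^sup>+k. ennreal (G (j, k)) \<partial>count_space UNIV)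
          = (\<integral>\<^sup>+k. ennreal ((1 / sqrt 2) * alpha_coef a j) * ennreal (alpha_coef a k * cmod (h (s - of_int k * (1 / sqrt a)))) \<partial>count_space UNIV)"
        by (rule nn_integral_cong, simp only: G_def prod.case, rule ennreal_mult) (use a0' in auto)
      also have "\<dots> = ennreal ((1 / sqrt 2) * alpha_coef a j) * (\<integral>\<^sup>+k. ennreal (alpha_coef a k * cmod (h (s - of_int k * (1 / sqrt a)))) \<partial>count_space UNIV)"
        by (rule nn_integral_cmult) simp
      also have "(\<integral>\<^sup>+k. ennreal (alpha_coef a k * cmod (h (s - of_int k * (1 / sqrt a)))) \<partial>count_space UNIV) = ennreal C"
        unfolding C_def by (rule nn_count_eq_infsum[OF _ elim]) (simp add: a0')
      finally show "(\<integral>\<^sup>+k. ennreal (G (j, k)) \<partial>count_space UNIV) = ennreal ((1 / sqrt 2) * alpha_coef a j) * ennreal C" .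
    qed
    also have "\<dots> = (\<integral>\<^sup>+j. ennreal ((1 / sqrt 2) * alpha_coef a j) \<partial>count_space UNIV) * ennreal C"
      by (rule nn_integral_multc) simp
    also have "(\<integral>\<^sup>+j. ennreal ((1 / sqrt 2) * alpha_coef a j) \<partial>count_space UNIV) = ennreal (infsum (\<lambda>j. (1 / sqrt 2) * alpha_coef a j) UNIV)"
      by (rule nn_count_eq_infsum[OF _ summable_on_cmult_right[OF as]]) (simp add: a0')
    finally have Gfin: "(\<integral>\<^sup>+p. ennreal (G p) \<partial>count_space UNIV) < \<infinity>"
      by (simp add: ennreal_mult_less_top)
    have Gs: "G summable_on UNIV" by (rule nn_count_finite_summable[OF G0 Gfin])
    have Fa: "(\<lambda>p. norm (case p of (j, k) \<Rightarrow> F j k)) summable_on UNIV"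
      using Gs by (simp add: FG case_prod_beta' cong: summable_on_cong)
    have Fs: "(\<lambda>(j, k). F j k) summable_on (UNIV \<times> UNIV)"
      using abs_summable_summable[OF Fa] by simp
    have "gram a gauss h s = infsum (\<lambda>(j, k). F j k) UNIV"
      unfolding gram_def F_def ..
    also have "\<dots> = infsum (\<lambda>j. infsum (\<lambda>k. F j k) UNIV) UNIV"
      using infsum_Sigma'_banach[OF Fs] by simp
    also have "\<dots> = infsum (\<lambda>k. infsum (\<lambda>j. F j k) UNIV) UNIV"
      by (rule infsum_swap_banach[OF Fs])
    also have "\<dots> = infsum (\<lambda>k. c2 * (cA a k s * h (s - of_int k * (1 / sqrt a)))) UNIV"
    proof (rule infsum_cong)
      fix k
      have "infsum (\<lambda>j. F j k) UNIV = c2 * (complex_of_real (alpha_coef a k) * infsum (\<lambda>j. thterm a j (zz a k s)) UNIV * h (s - of_int k * (1 / sqrt a)))"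
        by (simp only: Fe infsum_cmult_right' infsum_cmult_left')
      also have "\<dots> = c2 * (cA a k s * h (s - of_int k * (1 / sqrt a)))"
        by (simp add: cA_def Phi_thterm[OF a])
      finally show "infsum (\<lambda>j. F j k) UNIV = c2 * (cA a k s * h (s - of_int k * (1 / sqrt a)))" .
    qed
    also have "\<dots> = c2 * a0 a h s"
      by (simp add: infsum_cmult_right' a0_eq_wop wop_def)
    finally have "gram a gauss h s = c2 * a0 a h s" .
    then show ?case by (simp add: c2_def of_real_mult[symmetric] del: of_real_mult)
  qed
qed

theorem proposition1p4:
  fixes \<alpha> :: real
  assumes "0 < \<alpha>" and "\<alpha> \<le> 0.948"
  shows "a0_series_converges \<alpha> \<and> bounded_op (a0 \<alpha>) \<and> invertible_op (a0 \<alpha>)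
         \<and> a0 \<alpha> \<in> rot_alg \<alpha>
         \<and> (\<forall>h\<in>L2. AE t in lborel. a0 \<alpha> h t = complex_of_real (sqrt 2) * gram \<alpha> gauss h t)"
proof (intro conjI ballI)
  show "a0_series_converges \<alpha>" by (rule a0_converges[OF assms(1)])
  show "bounded_op (a0 \<alpha>)" by (rule a0_invertible(1)[OF assms])
  show "invertible_op (a0 \<alpha>)" by (rule a0_invertible(2)[OF assms])
  show "a0 \<alpha> \<in> rot_alg \<alpha>" by (rule a0_rot_alg[OF assms])
  show "AE t in lborel. a0 \<alpha> h t = complex_of_real (sqrt 2) * gram \<alpha> gauss h t" if "h \<in> L2" for h
    by (rule a0_gram[OF assms(1) that])
qed

end
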